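(* Let $\Bbbk$ be a field of characteristic zero and let $\mathbf{M},\mathbf{s},c_L,c_M\in\Bbbk$. The massive module $\widetilde{V}(\mathbf{M},\mathbf{s},c_L,c_M)$ over the BMS$_3$ algebra is irreducible if and only if $\mathbf{M}+\frac{n^2-1}{24}c_M\neq 0$ for every positive integer $n$.
   Context: The BMS$_3$ algebra $\mathfrak{bms}$ over $\Bbbk$ has basis $\{L_n,M_n\mid n\in\mathbb{Z}\}\cup\{C_L,C_M\}$, with $C_L,C_M$ central and brackets $[L_n,L_m]=(n-m)L_{n+m}+\frac1{12}n(n^2-1)\delta_{m,-n}C_L$, $[L_n,M_m]=(n-m)M_{n+m}+\frac1{12}n(n^2-1)\delta_{m,-n}C_M$, $[M_n,M_m]=0$. Let $\widehat{\mathfrak h}$ be the subalgebra spanned by $\{M_n\mid n\in\mathbb{Z}\}\cup\{L_0,C_L,C_M\}$, and let $\Bbbk|\mathbf{M},\mathbf{s}\rangle$ be the one-dimensional $\widehat{\mathfrak h}$-module with $L_0$ acting by $\mathbf{s}$, $M_0$ by $\mathbf{M}$, $C_L$ by $c_L$, $C_M$ by $c_M$, and $M_n$ by $0$ for $n\neq 0$. The massive module is $\widetilde V(\mathbf{M},\mathbf{s},c_L,c_M)=\mathrm{Ind}_{\widehat{\mathfrak h}}^{\mathfrak{bms}}\Bbbk|\mathbf{M},\mathbf{s}\rangle$. *)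

theory Defs
  imports Main
begin

datatype gen = L int | M int | CL | CM

text \<open>Elements of the tensor algebra T(bms) over the field: functions from words
  (lists of generators; the word [g1,...,gk] stands for g1 g2 ... gk) to coefficients,
  with finite support.\<close>
definition Tens :: "(gen list \<Rightarrow> 'a::field) set" where
  "Tens = {f. finite {w. f w \<noteq> 0}}"

definition sgl :: "gen list \<Rightarrow> 'a::field \<Rightarrow> gen list \<Rightarrow> 'a" where
  "sgl w c = (\<lambda>v. if v = w then c else 0)"

definition lmul :: "gen \<Rightarrow> (gen list \<Rightarrow> 'a::field) \<Rightarrow> gen list \<Rightarrow> 'a" where
  "lmul g f = (\<lambda>v. case v of [] \<Rightarrow> 0 | g' # v' \<Rightarrow> if g' = g then f v' else 0)"

text \<open>Lie bracket [x,y] of generators, as a list of (generator, coefficient).\<close>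
fun brkc :: "gen \<Rightarrow> gen \<Rightarrow> (gen \<times> 'a::field) list" where
  "brkc (L n) (L m) = [(L (n + m), of_int (n - m))]
      @ (if m = - n then [(CL, of_int (n ^ 3 - n) / 12)] else [])"
| "brkc (L n) (M m) = [(M (n + m), of_int (n - m))]
      @ (if m = - n then [(CM, of_int (n ^ 3 - n) / 12)] else [])"
| "brkc (M m) (L n) = [(M (n + m), - of_int (n - m))]
      @ (if m = - n then [(CM, - (of_int (n ^ 3 - n) / 12))] else [])"
| "brkc _ _ = []"

definition rel_comm :: "gen list \<Rightarrow> gen \<Rightarrow> gen \<Rightarrow> gen list \<Rightarrow> gen list \<Rightarrow> 'a::field" where
  "rel_comm u x y w = (\<lambda>v. sgl (u @ [x, y] @ w) 1 v - sgl (u @ [y, x] @ w) 1 v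
      - sum_list (map (\<lambda>(g, c). sgl (u @ [g] @ w) c v) (brkc x y)))"

text \<open>The character of \<open>\<widehat>h\<close> on the one-dimensional module: defined (Some) exactly on
  the basis elements M_n, L_0, C_L, C_M of \<open>\<widehat>h\<close>.\<close>
fun chi :: "'a \<Rightarrow> 'a \<Rightarrow> 'a \<Rightarrow> 'a \<Rightarrow> gen \<Rightarrow> ('a::field) option" where
  "chi Mv s cL cM (L n) = (if n = 0 then Some s else None)"
| "chi Mv s cL cM (M n) = Some (if n = 0 then Mv else 0)"
| "chi Mv s cL cM CL = Some cL"
| "chi Mv s cL cM CM = Some cM"

inductive_set spanS :: "('b \<Rightarrow> 'a::field) set \<Rightarrow> ('b \<Rightarrow> 'a) set" for S where
  zero: "(\<lambda>_. 0) \<in> spanS S"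
| base: "f \<in> S \<Longrightarrow> f \<in> spanS S"
| add: "f \<in> spanS S \<Longrightarrow> g \<in> spanS S \<Longrightarrow> (\<lambda>v. f v + g v) \<in> spanS S"
| smul: "f \<in> spanS S \<Longrightarrow> (\<lambda>v. c * f v) \<in> spanS S"

text \<open>Kernel of T(bms) \<rightarrow> U(bms) \<otimes>_{U(\<widehat>h)} k|M,s>: spanned by the two-sided
  commutator relations and the left ideal generated by h - chi(h), h in \<open>\<widehat>h\<close>.\<close>
definition Nsub :: "'a \<Rightarrow> 'a \<Rightarrow> 'a \<Rightarrow> 'a \<Rightarrow> (gen list \<Rightarrow> 'a::field) set" where
  "Nsub Mv s cL cM = spanS
     ({rel_comm u x y w | u x y w. True}
      \<union> {(\<lambda>v. sgl (u @ [h]) 1 v - sgl u c v) | u h c. chi Mv s cL cM h = Some c})"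

text \<open>The massive module is Tens / Nsub. Its submodules correspond to subspaces W with
  Nsub \<subseteq> W \<subseteq> Tens closed under left multiplication by generators.\<close>
definition massive_irreducible :: "'a \<Rightarrow> 'a \<Rightarrow> 'a \<Rightarrow> 'a::field \<Rightarrow> bool" where
  "massive_irreducible Mv s cL cM \<longleftrightarrow>
     Nsub Mv s cL cM \<noteq> Tens \<and>
     (\<forall>W. Nsub Mv s cL cM \<subseteq> W \<and> W \<subseteq> Tens
        \<and> (\<forall>f\<in>W. \<forall>g\<in>W. (\<lambda>v. f v + g v) \<in> W)
        \<and> (\<forall>f\<in>W. \<forall>c. (\<lambda>v. c * f v) \<in> W)
        \<and> (\<forall>f\<in>W. \<forall>x. lmul x f \<in> W)
        \<longrightarrow> W = Nsub Mv s cL cM \<or> W = Tens)"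

end

theory Submission
  imports Defs "HOL-Library.Function_Algebras" "HOL-Library.Multiset"
begin

definition LCs :: "(gen \<Rightarrow> 'a::field_char_0) \<Rightarrow> (gen \<times> 'a) list \<Rightarrow> 'a" where
  "LCs A xs = sum_list (map (\<lambda>(g, a). a * A g) xs)"

lemma LCs_simps[simp]: "LCs A [] = 0" "LCs A ((g,a) # xs) = a * A g + LCs A xs"
  "LCs A (xs @ ys) = LCs A xs + LCs A ys"
  by (simp_all add: LCs_def)

lemma brk_antisym: "LCs A (brkc x y) = - LCs (A::gen \<Rightarrow> 'a::field_char_0) (brkc y x)"
proof (cases x; cases y)
  fix n m assume "x = L n" "y = L m"
  then show ?thesis
    by (auto simp: field_simps)
next
  fix n m assume "x = L n" "y = M m"
  then show ?thesis by (auto simp: algebra_simps)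
next
  fix n m assume "x = M n" "y = L m"
  then show ?thesis by (auto simp: algebra_simps)
qed auto


lemma jacobi: "LCs (\<lambda>g. LCs A (brkc g y)) (brkc x c) + LCs (\<lambda>g. LCs A (brkc x g)) (brkc y c)
   = LCs (\<lambda>g. LCs (A::gen \<Rightarrow> 'a::field_char_0) (brkc g c)) (brkc x y)"
  apply (cases x; cases y; cases c)
  apply (auto simp: field_simps)
  apply (((drule arg_cong[where f="of_int::int\<Rightarrow>'a"])+)?, (simp add: algebra_simps)?,
     (thin_tac "x = _")?, (thin_tac "y = _")?, (thin_tac "c = _")?, ((thin_tac "_ \<noteq> _")+)?, algebra)+
  done


definition supp :: "('b \<Rightarrow> 'a::zero) \<Rightarrow> 'b set" where "supp F = {v. F v \<noteq> 0}"
definition fin :: "('b \<Rightarrow> 'a::zero) \<Rightarrow> bool" where "fin F = finite (supp F)"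
definition lext :: "('b \<Rightarrow> 'c \<Rightarrow> 'a::field_char_0) \<Rightarrow> ('b \<Rightarrow> 'a) \<Rightarrow> 'c \<Rightarrow> 'a" where
  "lext G F = (\<lambda>v. \<Sum>\<rho>\<in>supp F. F \<rho> * G \<rho> v)"
definition sc :: "'a::field_char_0 \<Rightarrow> ('b \<Rightarrow> 'a) \<Rightarrow> 'b \<Rightarrow> 'a" where "sc a F = (\<lambda>v. a * F v)"
definition LCv :: "(gen \<Rightarrow> 'b \<Rightarrow> 'a::field_char_0) \<Rightarrow> (gen \<times> 'a) list \<Rightarrow> 'b \<Rightarrow> 'a" where
  "LCv A xs = (\<lambda>v. LCs (\<lambda>g. A g v) xs)"

lemma LCv_simps[simp]: "LCv A [] = 0" "LCv A ((g,a) # xs) = sc a (A g) + LCv A xs"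
  "LCv A (xs @ ys) = LCv A xs + LCv A ys"
  by (auto simp: LCv_def sc_def)

lemma sc_apply[simp]: "sc a F v = a * F v" by (simp add: sc_def)
lemma LCv_apply: "LCv A xs v = LCs (\<lambda>g. A g v) xs" by (simp add: LCv_def)

lemma supp_iff[simp]: "v \<in> supp F \<longleftrightarrow> F v \<noteq> 0" by (simp add: supp_def)

lemma lext_eq: "finite S \<Longrightarrow> supp F \<subseteq> S \<Longrightarrow> lext G F = (\<lambda>v. \<Sum>\<rho>\<in>S. F \<rho> * G \<rho> v)"
  unfolding lext_def by (rule ext, rule sum.mono_neutral_left) auto

lemma fin_zero[simp]: "fin 0" by (simp add: fin_def supp_def)
lemma fin_add[intro]: "fin F \<Longrightarrow> fin G \<Longrightarrow> fin (F + (G::'b \<Rightarrow> 'a::field_char_0))"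
  unfolding fin_def by (rule finite_subset[of _ "supp F \<union> supp G"]) auto
lemma fin_diff[intro]: "fin F \<Longrightarrow> fin G \<Longrightarrow> fin (F - (G::'b \<Rightarrow> 'a::field_char_0))"
  unfolding fin_def by (rule finite_subset[of _ "supp F \<union> supp G"]) auto
lemma fin_uminus[intro]: "fin F \<Longrightarrow> fin (- (F::'b \<Rightarrow> 'a::field_char_0))"
  unfolding fin_def by (rule finite_subset[of _ "supp F"]) auto
lemma fin_sc[intro]: "fin F \<Longrightarrow> fin (sc a F)"
  unfolding fin_def by (rule finite_subset[of _ "supp F"]) auto
lemma fin_sgl[intro, simp]: "fin (sgl w a)"
  unfolding fin_def by (rule finite_subset[of _ "{w}"]) (auto simp: sgl_def split: if_splits)
lemma fin_sum[intro]: "finite S \<Longrightarrow> (\<And>i. i \<in> S \<Longrightarrow> fin (G i)) \<Longrightarrow> fin (\<lambda>v. \<Sum>i\<in>S. a i * (G i v :: 'a::field_char_0))"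
  unfolding fin_def
proof (rule finite_subset[of _ "\<Union>i\<in>S. supp (G i)"])
  show "supp (\<lambda>v. \<Sum>i\<in>S. a i * G i v) \<subseteq> (\<Union>i\<in>S. supp (G i))"
  proof
    fix v assume "v \<in> supp (\<lambda>v. \<Sum>i\<in>S. a i * G i v)"
    then have "(\<Sum>i\<in>S. a i * G i v) \<noteq> 0" by simp
    then obtain i where "i \<in> S" "a i * G i v \<noteq> 0" by (rule sum.not_neutral_contains_not_neutral)
    then have "G i v \<noteq> 0" by auto
    then show "v \<in> (\<Union>i\<in>S. supp (G i))" using \<open>i \<in> S\<close> by auto
  qed
qed (auto simp: fin_def)
lemma fin_LCv[intro]: "(\<And>g. fin (A g)) \<Longrightarrow> fin (LCv A xs)"
proof (induction xs)
  case (Cons p xs)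
  obtain g a where p: "p = (g, a)" by (cases p)
  have "fin (sc a (A g) + LCv A xs)" using Cons by (intro fin_add fin_sc) auto
  then show ?case by (simp only: p LCv_simps)
qed simp
lemma fin_lext[intro]: "fin F \<Longrightarrow> (\<And>\<rho>. \<rho> \<in> supp F \<Longrightarrow> fin (G \<rho>)) \<Longrightarrow> fin (lext G F)"
  unfolding lext_def using fin_sum[of "supp F" G F] by (auto simp: fin_def)

lemma supp_lext: "v \<in> supp (lext G F) \<Longrightarrow> \<exists>\<rho>\<in>supp F. v \<in> supp (G \<rho>)"
proof -
  assume "v \<in> supp (lext G F)"
  then have "(\<Sum>\<rho>\<in>supp F. F \<rho> * G \<rho> v) \<noteq> 0" by (simp add: lext_def)
  then obtain \<rho> where "\<rho> \<in> supp F" "F \<rho> * G \<rho> v \<noteq> 0" by (rule sum.not_neutral_contains_not_neutral)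
  then show ?thesis by auto
qed

lemma supp_LCv: "v \<in> supp (LCv A xs) \<Longrightarrow> \<exists>(g,a)\<in>set xs. v \<in> supp (A g)"
  by (induction xs) (auto simp: LCv_def)

lemma lext_add: "fin F1 \<Longrightarrow> fin F2 \<Longrightarrow> lext G (F1 + F2) = lext G F1 + lext G F2"
proof -
  assume a: "fin F1" "fin F2"
  let ?S = "supp F1 \<union> supp F2"
  have f: "finite ?S" using a by (auto simp: fin_def)
  show ?thesis
    apply (subst lext_eq[OF f], force)
    apply (subst lext_eq[OF f, of F1], force)
    apply (subst lext_eq[OF f, of F2], force)
    apply (auto simp: fun_eq_iff distrib_right sum.distrib)
    done
qed

lemma lext_sc: "lext G (sc a F) = sc a (lext G F)"
proof (cases "a = 0")
  case True then show ?thesis by (simp add: lext_def sc_def supp_def fun_eq_iff)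
next
  case False
  then have "supp (sc a F) = supp F" by (auto simp: supp_def)
  then show ?thesis by (simp add: lext_def sc_def fun_eq_iff sum_distrib_left mult.assoc)
qed

lemma lext_uminus: "lext G (- F) = - lext G F"
proof -
  have "supp (- F) = supp F" by (auto simp: supp_def)
  then show ?thesis by (simp add: lext_def fun_eq_iff sum_negf)
qed

lemma lext_diff: "fin F1 \<Longrightarrow> fin F2 \<Longrightarrow> lext G (F1 - F2) = lext G F1 - lext G F2"
  using lext_add[of F1 "- F2" G] by (simp add: lext_uminus fin_uminus)

lemma lext_zero[simp]: "lext G 0 = 0" by (simp add: lext_def supp_def fun_eq_iff)

lemma lext_sgl[simp]: "lext G (sgl w a) = sc a (G w)"
proof (cases "a = 0")
  case True then show ?thesis by (simp add: lext_def sc_def supp_def sgl_def fun_eq_iff)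
next
  case False
  then have "supp (sgl w a) = {w}" by (auto simp: supp_def sgl_def)
  then show ?thesis by (simp add: lext_def sc_def sgl_def fun_eq_iff)
qed

lemma lext_cong: "(\<And>\<rho>. F \<rho> \<noteq> 0 \<Longrightarrow> G1 \<rho> = G2 \<rho>) \<Longrightarrow> lext G1 F = lext G2 F"
  unfolding lext_def by (auto intro!: sum.cong ext)

lemma lext_Gadd: "lext (\<lambda>\<rho>. G1 \<rho> + G2 \<rho>) F = lext G1 F + lext G2 F"
  by (simp add: lext_def fun_eq_iff distrib_left sum.distrib)
lemma lext_Gdiff: "lext (\<lambda>\<rho>. G1 \<rho> - G2 \<rho>) F = lext G1 F - lext G2 F"
  by (simp add: lext_def fun_eq_iff right_diff_distrib sum_subtractf)
lemma lext_Gsc: "lext (\<lambda>\<rho>. sc a (G \<rho>)) F = sc a (lext G F)"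
  by (simp add: lext_def fun_eq_iff sum_distrib_left algebra_simps)
lemma lext_Gzero: "lext (\<lambda>\<rho>. 0) F = 0"
  apply (unfold lext_def)
  apply (simp add: fun_eq_iff)
  done
lemma lext_Gzero': "lext (\<lambda>\<rho> v. 0) F = (\<lambda>v. 0)"
  apply (unfold lext_def)
  apply (simp add: fun_eq_iff)
  done
lemma lext_GLCv: "lext (\<lambda>\<rho>. LCv (\<lambda>g. A g \<rho>) xs) F = LCv (\<lambda>g. lext (A g) F) xs"
  by (induction xs) (auto simp: lext_Gadd lext_Gsc lext_Gzero lext_Gzero')

lemma LCv_add: "LCv (\<lambda>g. A g + B g) xs = LCv A xs + LCv B xs"
  by (induction xs) (auto simp: fun_eq_iff algebra_simps)
lemma LCv_diff: "LCv (\<lambda>g. A g - B g) xs = LCv A xs - LCv B xs"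
  by (induction xs) (auto simp: fun_eq_iff algebra_simps)
lemma LCv_zero: "LCv (\<lambda>g. 0) xs = 0"
  by (induction xs) (auto simp: fun_eq_iff algebra_simps)

lemma lext_lext: "fin F \<Longrightarrow> (\<And>\<rho>. \<rho> \<in> supp F \<Longrightarrow> fin (G \<rho>)) \<Longrightarrow> lext H (lext G F) = lext (\<lambda>\<rho>. lext H (G \<rho>)) F"
proof -
  assume a: "fin F" "\<And>\<rho>. \<rho> \<in> supp F \<Longrightarrow> fin (G \<rho>)"
  define S where "S = (\<Union>\<rho>\<in>supp F. supp (G \<rho>))"
  have fS: "finite S" using a by (auto simp: S_def fin_def)
  have s1: "supp (lext G F) \<subseteq> S" using supp_lext[of _ G F] by (auto simp: S_def)
  have e: "lext H (G \<rho>) = (\<lambda>v. \<Sum>\<tau>\<in>S. G \<rho> \<tau> * H \<tau> v)" if "\<rho> \<in> supp F" for \<rho>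
    by (rule lext_eq[OF fS]) (use that in \<open>auto simp: S_def\<close>)
  have "lext H (lext G F) = (\<lambda>v. \<Sum>\<tau>\<in>S. lext G F \<tau> * H \<tau> v)" by (rule lext_eq[OF fS s1])
  also have "\<dots> = (\<lambda>v. \<Sum>\<tau>\<in>S. \<Sum>\<rho>\<in>supp F. F \<rho> * (G \<rho> \<tau> * H \<tau> v))"
    by (simp add: lext_def sum_distrib_right mult.assoc)
  also have "\<dots> = (\<lambda>v. \<Sum>\<rho>\<in>supp F. F \<rho> * (\<Sum>\<tau>\<in>S. G \<rho> \<tau> * H \<tau> v))"
    by (subst sum.swap) (simp add: sum_distrib_left)
  also have "\<dots> = (\<lambda>v. \<Sum>\<rho>\<in>supp F. F \<rho> * lext H (G \<rho>) v)"
    by (rule ext, rule sum.cong) (simp_all add: e)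
  also have "\<dots> = lext (\<lambda>\<rho>. lext H (G \<rho>)) F"
    by (simp only: lext_def)
  finally show ?thesis .
qed

lemma sum_vec_eq: "finite S \<Longrightarrow> supp F \<subseteq> S \<Longrightarrow>
   F = (\<lambda>v. \<Sum>w\<in>S. F w * sgl w 1 v)"
proof (rule ext)
  fix v assume a: "finite S" "supp F \<subseteq> S"
  have "(\<Sum>w\<in>S. F w * sgl w 1 v) = (\<Sum>w\<in>S. if v = w then F v else 0)"
    by (rule sum.cong) (auto simp: sgl_def)
  also have "\<dots> = F v" using a by (auto simp: sum.delta)
  finally show "F v = (\<Sum>w\<in>S. F w * sgl w 1 v)" by simp
qed


fun key :: "gen \<Rightarrow> int" where
  "key (L i) = i" | "key _ = 0"

function pact :: "(gen \<Rightarrow> 'a::field_char_0 option) \<Rightarrow> gen \<Rightarrow> gen list \<Rightarrow> gen list \<Rightarrow> 'a" where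
  "pact ch x [] = (case ch x of None \<Rightarrow> sgl [x] 1 | Some a \<Rightarrow> sgl [] a)"
| "pact ch x (c # t) = (if ch x = None \<and> key x \<le> key c then sgl (x # c # t) 1
    else (\<lambda>v. (\<Sum>\<rho>\<in>{\<rho>. pact ch x t \<rho> \<noteq> 0}. pact ch x t \<rho> *
                 (if length \<rho> \<le> length t then pact ch c \<rho> v else sgl (c # \<rho>) 1 v))
            + sum_list (map (\<lambda>(g, a). a * pact ch g t v) (brkc x c))))"
  by pat_completeness auto
termination by (relation "measure (\<lambda>(ch, x, s). length s)") auto

declare pact.simps(2)[simp del]

lemma pact_Cons_prep: "ch x = None \<Longrightarrow> key x \<le> key c \<Longrightarrow> pact ch x (c # t) = sgl (x # c # t) 1"
  by (simp add: pact.simps(2))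

lemma pact_Cons_rec: "\<not> (ch x = None \<and> key x \<le> key c) \<Longrightarrow> pact ch x (c # t) =
   lext (\<lambda>\<rho>. if length \<rho> \<le> length t then pact ch c \<rho> else sgl (c # \<rho>) 1) (pact ch x t)
   + LCv (\<lambda>g. pact ch g t) (brkc x c)"
proof -
  assume a: "\<not> (ch x = None \<and> key x \<le> key c)"
  have if_app: "(if P then f else g) v = (if P then f v else g v)" for P f g v by simp
  have "(ch x = None \<and> key x \<le> key c) = False" using a by simp
  then show ?thesis
    by (simp only: pact.simps(2) if_False) (simp add: lext_def supp_def LCv_def LCs_def fun_eq_iff if_app)
qed

lemma fin_pact: "fin (pact ch x \<sigma>)"
proof (induction "length \<sigma>" arbitrary: x \<sigma> rule: less_induct)
  case less
  show ?case
  proof (cases \<sigma>)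
    case Nil then show ?thesis by (cases "ch x") auto
  next
    case (Cons c t)
    show ?thesis
    proof (cases "ch x = None \<and> key x \<le> key c")
      case True then show ?thesis by (simp add: Cons pact_Cons_prep)
    next
      case False
      have "fin (pact ch x t)" using less Cons by auto
      moreover have "fin (pact ch g t)" for g using less Cons by auto
      moreover have "fin (if length \<rho> \<le> length t then pact ch c \<rho> else sgl (c # \<rho>) 1)" for \<rho>
        using less Cons by auto
      ultimately show ?thesis unfolding Cons pact_Cons_rec[of ch x c t, OF False]
        by (intro fin_add fin_lext fin_LCv) auto
    qed
  qed
qed

lemma LCv_brk_antisym: "LCv A (brkc x y) = - LCv A (brkc y x)"
  by (simp add: fun_eq_iff LCv_apply brk_antisym[of _ x y])

lemma LCv_brk_self: "LCv A (brkc x x) = 0"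
proof -
  have "LCv A (brkc x x) v = 0" for v
  proof -
    have "LCs (\<lambda>g. A g v) (brkc x x) = - LCs (\<lambda>g. A g v) (brkc x x)" by (rule brk_antisym)
    then show ?thesis by (simp add: LCv_apply)
  qed
  then show ?thesis by (simp add: fun_eq_iff)
qed

lemma LCs_cong: "(\<And>g a. (g, a) \<in> set xs \<Longrightarrow> a \<noteq> 0 \<Longrightarrow> A g = B g) \<Longrightarrow> LCs A xs = LCs B xs"
proof (induction xs)
  case (Cons p xs)
  obtain g a where p: "p = (g, a)" by (cases p)
  have "LCs A xs = LCs B xs" using Cons by auto
  moreover have "a * A g = a * B g" using Cons.prems[of g a] p by (cases "a = 0") auto
  ultimately show ?case by (simp add: p)
qed simp

lemma LCs_scale: "LCs (\<lambda>g. k g * s) xs = LCs k xs * s"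
  by (induction xs) (auto simp: algebra_simps)

lemma lext_LCv: "(\<And>g. fin (A g)) \<Longrightarrow> lext H (LCv A xs) = LCv (\<lambda>g. lext H (A g)) xs"
proof (induction xs)
  case (Cons p xs)
  obtain g a where p: "p = (g, a)" by (cases p)
  have "lext H (LCv A (p # xs)) = lext H (sc a (A g) + LCv A xs)" by (simp only: p LCv_simps)
  also have "\<dots> = sc a (lext H (A g)) + lext H (LCv A xs)"
    using Cons by (simp add: lext_add fin_sc fin_LCv lext_sc)
  also have "\<dots> = sc a (lext H (A g)) + LCv (\<lambda>g. lext H (A g)) xs"
    using Cons.IH[OF Cons.prems] by simp
  also have "\<dots> = LCv (\<lambda>g. lext H (A g)) (p # xs)" by (simp only: p LCv_simps)
  finally show ?case .
qed simp

lemma LCv_jacobi: "LCv (\<lambda>g. LCv B (brkc g y)) (brkc x c) + LCv (\<lambda>g. LCv B (brkc x g)) (brkc y c)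
   = LCv (\<lambda>g. LCv B (brkc g c)) (brkc x y)"
  by (simp add: fun_eq_iff LCv_apply jacobi)


locale pbw =
  fixes ch :: "gen \<Rightarrow> 'a::field_char_0 option"
  assumes C_L: "ch g = None \<Longrightarrow> \<exists>i. g = L i"
  and H_closed: "ch x \<noteq> None \<Longrightarrow> ch y \<noteq> None \<Longrightarrow> (g, a) \<in> set (brkc x y :: (gen \<times> 'a) list) \<Longrightarrow> a \<noteq> 0 \<Longrightarrow> ch g \<noteq> None"
  and H_char: "ch x \<noteq> None \<Longrightarrow> ch y \<noteq> None \<Longrightarrow> LCs (\<lambda>g. case ch g of Some c \<Rightarrow> c | None \<Rightarrow> 0) (brkc x y) = 0"
begin

abbreviation act where "act \<equiv> pact ch"

definition srt :: "gen list \<Rightarrow> bool" where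
  "srt \<sigma> \<longleftrightarrow> (\<forall>g\<in>set \<sigma>. ch g = None) \<and> sorted (map key \<sigma>)"

lemma srt_Nil[simp]: "srt []" by (simp add: srt_def)
lemma srt_Cons: "srt (c # t) \<longleftrightarrow> ch c = None \<and> (\<forall>y\<in>set t. key c \<le> key y) \<and> srt t"
  by (auto simp: srt_def)

lemma key_inj: "ch g = None \<Longrightarrow> ch h = None \<Longrightarrow> key g = key h \<Longrightarrow> g = h"
  using C_L[of g] C_L[of h] by auto

lemma sgl_nz: "sgl w a v \<noteq> 0 \<Longrightarrow> v = w" by (simp add: sgl_def split: if_splits)

lemma LT: "srt \<sigma> \<Longrightarrow> act x \<sigma> \<rho> \<noteq> 0 \<Longrightarrow> srt \<rho> \<and> (length \<rho> \<le> length \<sigma> \<or>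
   (length \<rho> = Suc (length \<sigma>) \<and> ch x = None \<and> set \<rho> \<subseteq> insert x (set \<sigma>)))"
proof (induction "length \<sigma>" arbitrary: x \<sigma> \<rho> rule: less_induct)
  case less
  show ?case
  proof (cases \<sigma>)
    case Nil
    then show ?thesis using less.prems
      by (cases "ch x") (auto simp: srt_def dest!: sgl_nz)
  next
    case (Cons c t)
    have sc: "ch c = None" "\<forall>y\<in>set t. key c \<le> key y" "srt t" using less.prems Cons by (auto simp: srt_Cons)
    show ?thesis
    proof (cases "ch x = None \<and> key x \<le> key c")
      case True
      then have "\<rho> = x # c # t" using less.prems Cons by (auto simp: pact_Cons_prep dest!: sgl_nz)
      then show ?thesis using True sc Cons by (auto simp: srt_Cons)
    next
      case False
      let ?G = "\<lambda>\<rho>. if length \<rho> \<le> length t then act c \<rho> else sgl (c # \<rho>) 1"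
      have "(lext ?G (act x t) + LCv (\<lambda>g. act g t) (brkc x c)) \<rho> \<noteq> 0"
        using less.prems Cons pact_Cons_rec[of ch x c t, OF False] by simp
      then have "\<rho> \<in> supp (lext ?G (act x t)) \<or> \<rho> \<in> supp (LCv (\<lambda>g. act g t) (brkc x c))"
        by auto
      then show ?thesis
      proof
        assume "\<rho> \<in> supp (lext ?G (act x t))"
        then obtain \<rho>' where r1: "act x t \<rho>' \<noteq> 0" and r2: "?G \<rho>' \<rho> \<noteq> 0"
          using supp_lext by fastforce
        have ih: "srt \<rho>' \<and> (length \<rho>' \<le> length t \<or>
           (length \<rho>' = Suc (length t) \<and> ch x = None \<and> set \<rho>' \<subseteq> insert x (set t)))"
          using less.hyps[of t x \<rho>'] Cons sc r1 by auto
        show ?thesis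
        proof (cases "length \<rho>' \<le> length t")
          case True
          then have "act c \<rho>' \<rho> \<noteq> 0" using r2 by simp
          then have "srt \<rho> \<and> length \<rho> \<le> Suc (length \<rho>')"
            using less.hyps[of \<rho>' c \<rho>] True Cons ih by auto
          then show ?thesis using True Cons by auto
        next
          case False
          then have "\<rho> = c # \<rho>'" using r2 by (auto dest!: sgl_nz)
          moreover have "length \<rho>' = Suc (length t)" "ch x = None" "set \<rho>' \<subseteq> insert x (set t)"
            using ih False by auto
          moreover have "key c < key x" using \<open>ch x = None\<close> \<open>\<not> (ch x = None \<and> key x \<le> key c)\<close> by auto
          ultimately show ?thesis using sc ih Cons by (auto simp: srt_Cons)
        qed
      next
        assume "\<rho> \<in> supp (LCv (\<lambda>g. act g t) (brkc x c))"
        from supp_LCv[OF this] have "\<exists>p\<in>set (brkc x c :: (gen \<times> 'a) list). \<rho> \<in> supp (act (fst p) t)"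
          by (auto simp: case_prod_beta)
        then obtain p where "p \<in> set (brkc x c :: (gen \<times> 'a) list)" "\<rho> \<in> supp (act (fst p) t)" by blast
        then have "act (fst p) t \<rho> \<noteq> 0" by simp
        then have "srt \<rho> \<and> length \<rho> \<le> Suc (length t)"
          using less.hyps[of t "fst p" \<rho>] Cons sc by auto
        then show ?thesis using Cons by auto
      qed
    qed
  qed
qed

lemma Pre: "ch c = None \<Longrightarrow> (\<forall>y\<in>set \<rho>. key c \<le> key y) \<Longrightarrow> act c \<rho> = sgl (c # \<rho>) 1"
  by (cases \<rho>) (auto simp: pact_Cons_prep)

lemma Rec: "srt (c # t) \<Longrightarrow> \<not> (ch x = None \<and> key x \<le> key c) \<Longrightarrow>
  act x (c # t) = lext (act c) (act x t) + LCv (\<lambda>g. act g t) (brkc x c)"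
proof -
  assume s: "srt (c # t)" and b: "\<not> (ch x = None \<and> key x \<le> key c)"
  have sc: "ch c = None" "\<forall>y\<in>set t. key c \<le> key y" "srt t" using s by (auto simp: srt_Cons)
  have "lext (\<lambda>\<rho>. if length \<rho> \<le> length t then act c \<rho> else sgl (c # \<rho>) 1) (act x t) = lext (act c) (act x t)"
  proof (rule lext_cong)
    fix \<rho> assume r: "act x t \<rho> \<noteq> 0"
    show "(if length \<rho> \<le> length t then act c \<rho> else sgl (c # \<rho>) 1) = act c \<rho>"
    proof (cases "length \<rho> \<le> length t")
      case False
      then have "ch x = None" "set \<rho> \<subseteq> insert x (set t)" using LT[OF sc(3) r] by auto
      then have "\<forall>y\<in>set \<rho>. key c \<le> key y" using b sc by auto
      then show ?thesis using False Pre[OF sc(1)] by simp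
    qed simp
  qed
  then show ?thesis using pact_Cons_rec[of ch x c t, OF b] by simp
qed

lemma Star: "srt (c # t) \<Longrightarrow> act g (c # t) = lext (act c) (act g t) + LCv (\<lambda>h. act h t) (brkc g c)"
proof -
  assume s: "srt (c # t)"
  have sc: "ch c = None" "\<forall>y\<in>set t. key c \<le> key y" "srt t" using s by (auto simp: srt_Cons)
  show ?thesis
  proof (cases "ch g = None \<and> key g \<le> key c")
    case False then show ?thesis using Rec[OF s] by simp
  next
    case True
    have lhs: "act g (c # t) = sgl (g # c # t) 1" using True by (simp add: pact_Cons_prep)
    have gt: "act g t = sgl (g # t) 1" using True sc by (intro Pre) auto
    have ct: "act c t = sgl (c # t) 1" using sc by (intro Pre) auto
    show ?thesis
    proof (cases "g = c")
      case True
      then show ?thesis using lhs gt sc by (simp add: LCv_brk_self pact_Cons_prep sc_def)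
    next
      case False
      then have "key g \<noteq> key c" using True sc key_inj[of g c] by auto
      then have lt: "key g < key c" using True by auto
      have sgt: "srt (g # t)" using True sc by (auto simp: srt_Cons)
      have "act c (g # t) = lext (act g) (act c t) + LCv (\<lambda>h. act h t) (brkc c g)"
        using Rec[OF sgt] lt by simp
      also have "\<dots> = sgl (g # c # t) 1 + LCv (\<lambda>h. act h t) (brkc c g)"
        using ct True by (simp add: pact_Cons_prep sc_def)
      finally have e1: "act c (g # t) = sgl (g # c # t) 1 + LCv (\<lambda>h. act h t) (brkc c g)" .
      have e2: "lext (act c) (act g t) = act c (g # t)" by (simp add: gt sc_def)
      show ?thesis unfolding lhs e2 e1 LCv_brk_antisym[of _ c g] by simp
    qed
  qed
qed

end

context pbw
begin

definition Rel :: "gen \<Rightarrow> gen \<Rightarrow> gen list \<Rightarrow> bool" where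
  "Rel x y \<sigma> \<longleftrightarrow> lext (act x) (act y \<sigma>) - lext (act y) (act x \<sigma>) = LCv (\<lambda>g. act g \<sigma>) (brkc x y)"

lemma lext_sgl1: "lext G (sgl w 1) = G w" by (simp add: sc_def)
lemma sc_one[simp]: "sc 1 F = F" by (simp add: sc_def)

lemma RA: "srt \<sigma> \<Longrightarrow> ch y = None \<Longrightarrow> (\<forall>z\<in>set \<sigma>. key y \<le> key z) \<Longrightarrow> Rel x y \<sigma>"
proof -
  assume s: "srt \<sigma>" and y: "ch y = None" and k: "\<forall>z\<in>set \<sigma>. key y \<le> key z"
  have a1: "act y \<sigma> = sgl (y # \<sigma>) 1" using Pre y k by auto
  have s2: "srt (y # \<sigma>)" using s y k by (simp add: srt_Cons)
  have "lext (act x) (act y \<sigma>) = act x (y # \<sigma>)" by (simp add: a1 lext_sgl1)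
  also have "\<dots> = lext (act y) (act x \<sigma>) + LCv (\<lambda>h. act h \<sigma>) (brkc x y)" by (rule Star[OF s2])
  finally show ?thesis by (simp add: Rel_def)
qed

lemma ag1: "(b::'z::ab_group_add) - a = - c \<Longrightarrow> a - b = c"
  by (metis minus_diff_eq minus_minus)
lemma ag2: "(a::'z::ab_group_add) - b = c \<Longrightarrow> a = b + c"
  by (metis add.commute diff_add_cancel)

lemma Rel_swap: "Rel y x \<sigma> \<Longrightarrow> Rel x y \<sigma>"
  unfolding Rel_def LCv_brk_antisym[of _ y x] by (rule ag1)

lemma Rel_Nil: "Rel x y []"
proof (cases "ch y = None")
  case True then show ?thesis by (intro RA) auto
next
  case yS: False
  show ?thesis
  proof (cases "ch x = None")
    case True
    have "Rel y x []" using True by (intro RA) auto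
    then show ?thesis by (rule Rel_swap)
  next
    case xS: False
    obtain a b where ab: "ch x = Some a" "ch y = Some b" using xS yS by auto
    have z: "LCv (\<lambda>g. act g []) (brkc x y) v = 0" for v
    proof -
      have "LCv (\<lambda>g. act g []) (brkc x y) v = LCs (\<lambda>g. (case ch g of Some c \<Rightarrow> c | None \<Rightarrow> 0) * sgl [] 1 v) (brkc x y)"
        unfolding LCv_apply
      proof (rule LCs_cong)
        fix g and c :: 'a assume "(g, c) \<in> set (brkc x y)" "c \<noteq> 0"
        then have "ch g \<noteq> None" by (rule H_closed[OF xS yS])
        then obtain d where "ch g = Some d" by auto
        then show "act g [] v = (case ch g of Some c \<Rightarrow> c | None \<Rightarrow> 0) * sgl [] 1 v"
          by (simp add: sgl_def)
      qed
      also have "\<dots> = 0" unfolding LCs_scale using H_char[OF xS yS] by simp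
      finally show ?thesis .
    qed
    have ax: "act x [] = sgl [] a" "act y [] = sgl [] b" using ab by auto
    have "lext (act x) (act y []) = sc b (sgl [] a)" using ab by simp
    moreover have "lext (act y) (act x []) = sc a (sgl [] b)" using ab by simp
    ultimately show ?thesis unfolding Rel_def using z by (auto simp: fun_eq_iff sgl_def)
  qed
qed

lemma Rel_main: "srt \<sigma> \<Longrightarrow> Rel x y \<sigma>"
proof (induction "length \<sigma>" arbitrary: x y \<sigma> rule: less_induct)
  case less
  note fa = fin_pact
  show ?case
  proof (cases \<sigma>)
    case Nil
    then show ?thesis using Rel_Nil by simp
  next
    case (Cons c t)
    have s: "srt (c # t)" using less Cons by simp
    have sc: "ch c = None" "\<forall>y\<in>set t. key c \<le> key y" "srt t" using s by (auto simp: srt_Cons)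
    have IHt: "Rel x' y' t" for x' y' using less.hyps[of t x' y'] Cons sc by auto
    show ?thesis
    proof (cases "ch y = None \<and> key y \<le> key c")
      case True
      then show ?thesis using Cons s sc by (intro RA) auto
    next
      case yb: False
      show ?thesis
      proof (cases "ch x = None \<and> key x \<le> key c")
        case True
        have "Rel y x \<sigma>" using True Cons s sc by (intro RA) auto
        then show ?thesis by (rule Rel_swap)
      next
        case xb: False
        define F where "F = act x t"
        define G where "G = act y t"
        define B where "B = (\<lambda>h. act h t)"
        have fF: "fin F" "fin G" using fa by (auto simp: F_def G_def)
        have ax: "act x \<sigma> = lext (act c) F + LCv B (brkc x c)"
          using Rec[OF s xb] by (simp add: Cons F_def B_def)
        have ay: "act y \<sigma> = lext (act c) G + LCv B (brkc y c)"
          using Rec[OF s yb] by (simp add: Cons G_def B_def)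
        have relG: "Rel x c \<rho>" if "G \<rho> \<noteq> 0" for \<rho>
        proof -
          have l: "srt \<rho> \<and> (length \<rho> \<le> length t \<or> (length \<rho> = Suc (length t) \<and> ch y = None \<and> set \<rho> \<subseteq> insert y (set t)))"
            using LT[OF sc(3)] that by (simp add: G_def)
          show ?thesis
          proof (cases "length \<rho> \<le> length t")
            case True then show ?thesis using less.hyps[of \<rho> x c] l Cons by auto
          next
            case False
            then have "ch y = None" "set \<rho> \<subseteq> insert y (set t)" using l by auto
            then have "\<forall>z\<in>set \<rho>. key c \<le> key z" using yb sc by auto
            then show ?thesis using l sc by (intro RA) auto
          qed
        qed
        have relF: "Rel y c \<rho>" if "F \<rho> \<noteq> 0" for \<rho>
        proof -
          have l: "srt \<rho> \<and> (length \<rho> \<le> length t \<or> (length \<rho> = Suc (length t) \<and> ch x = None \<and> set \<rho> \<subseteq> insert x (set t)))"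
            using LT[OF sc(3)] that by (simp add: F_def)
          show ?thesis
          proof (cases "length \<rho> \<le> length t")
            case True then show ?thesis using less.hyps[of \<rho> y c] l Cons by auto
          next
            case False
            then have "ch x = None" "set \<rho> \<subseteq> insert x (set t)" using l by auto
            then have "\<forall>z\<in>set \<rho>. key c \<le> key z" using xb sc by auto
            then show ?thesis using l sc by (intro RA) auto
          qed
        qed
        have T1: "lext (act x) (act y \<sigma>) = lext (act c) (lext (act x) G) + LCv (\<lambda>g. lext (act g) G) (brkc x c)
             + LCv (\<lambda>g. lext (act x) (B g)) (brkc y c)"
        proof -
          have "lext (act x) (act y \<sigma>) = lext (act x) (lext (act c) G) + lext (act x) (LCv B (brkc y c))"
            unfolding ay by (rule lext_add) (use fF fa in \<open>auto simp: B_def\<close>)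
          also have "lext (act x) (lext (act c) G) = lext (\<lambda>\<rho>. lext (act x) (act c \<rho>)) G"
            by (rule lext_lext) (use fF fa in auto)
          also have "\<dots> = lext (\<lambda>\<rho>. lext (act c) (act x \<rho>) + LCv (\<lambda>g. act g \<rho>) (brkc x c)) G"
          proof (rule lext_cong)
            fix \<rho> assume "G \<rho> \<noteq> 0"
            then have "Rel x c \<rho>" by (rule relG)
            then show "lext (act x) (act c \<rho>) = lext (act c) (act x \<rho>) + LCv (\<lambda>g. act g \<rho>) (brkc x c)"
              unfolding Rel_def by (rule ag2)
          qed
          also have "\<dots> = lext (\<lambda>\<rho>. lext (act c) (act x \<rho>)) G + lext (\<lambda>\<rho>. LCv (\<lambda>g. act g \<rho>) (brkc x c)) G"
            by (rule lext_Gadd)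
          also have "lext (\<lambda>\<rho>. lext (act c) (act x \<rho>)) G = lext (act c) (lext (act x) G)"
            by (rule lext_lext[symmetric]) (use fF fa in auto)
          also have "lext (\<lambda>\<rho>. LCv (\<lambda>g. act g \<rho>) (brkc x c)) G = LCv (\<lambda>g. lext (act g) G) (brkc x c)"
            by (rule lext_GLCv)
          also have "lext (act x) (LCv B (brkc y c)) = LCv (\<lambda>g. lext (act x) (B g)) (brkc y c)"
            by (rule lext_LCv) (simp add: B_def fa)
          finally show ?thesis by (simp only: add.assoc)
        qed
        have T2: "lext (act y) (act x \<sigma>) = lext (act c) (lext (act y) F) + LCv (\<lambda>g. lext (act g) F) (brkc y c)
             + LCv (\<lambda>g. lext (act y) (B g)) (brkc x c)"
        proof -
          have "lext (act y) (act x \<sigma>) = lext (act y) (lext (act c) F) + lext (act y) (LCv B (brkc x c))"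
            unfolding ax by (rule lext_add) (use fF fa in \<open>auto simp: B_def\<close>)
          also have "lext (act y) (lext (act c) F) = lext (\<lambda>\<rho>. lext (act y) (act c \<rho>)) F"
            by (rule lext_lext) (use fF fa in auto)
          also have "\<dots> = lext (\<lambda>\<rho>. lext (act c) (act y \<rho>) + LCv (\<lambda>g. act g \<rho>) (brkc y c)) F"
          proof (rule lext_cong)
            fix \<rho> assume "F \<rho> \<noteq> 0"
            then have "Rel y c \<rho>" by (rule relF)
            then show "lext (act y) (act c \<rho>) = lext (act c) (act y \<rho>) + LCv (\<lambda>g. act g \<rho>) (brkc y c)"
              unfolding Rel_def by (rule ag2)
          qed
          also have "\<dots> = lext (\<lambda>\<rho>. lext (act c) (act y \<rho>)) F + lext (\<lambda>\<rho>. LCv (\<lambda>g. act g \<rho>) (brkc y c)) F"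
            by (rule lext_Gadd)
          also have "lext (\<lambda>\<rho>. lext (act c) (act y \<rho>)) F = lext (act c) (lext (act y) F)"
            by (rule lext_lext[symmetric]) (use fF fa in auto)
          also have "lext (\<lambda>\<rho>. LCv (\<lambda>g. act g \<rho>) (brkc y c)) F = LCv (\<lambda>g. lext (act g) F) (brkc y c)"
            by (rule lext_GLCv)
          also have "lext (act y) (LCv B (brkc x c)) = LCv (\<lambda>g. lext (act y) (B g)) (brkc x c)"
            by (rule lext_LCv) (simp add: B_def fa)
          finally show ?thesis by (simp only: add.assoc)
        qed
        have D1: "lext (act x) G - lext (act y) F = LCv B (brkc x y)"
          using IHt[of x y] by (simp add: Rel_def F_def G_def B_def)
        have D2: "LCv (\<lambda>g. lext (act g) G) (brkc x c) - LCv (\<lambda>g. lext (act y) (B g)) (brkc x c)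
                = LCv (\<lambda>g. LCv B (brkc g y)) (brkc x c)"
          unfolding LCv_diff[symmetric]
          by (rule arg_cong[where f="\<lambda>A. LCv A (brkc x c)"], rule ext)
             (use IHt in \<open>simp add: Rel_def G_def B_def\<close>)
        have D3: "LCv (\<lambda>g. lext (act x) (B g)) (brkc y c) - LCv (\<lambda>g. lext (act g) F) (brkc y c)
                = LCv (\<lambda>g. LCv B (brkc x g)) (brkc y c)"
          unfolding LCv_diff[symmetric]
          by (rule arg_cong[where f="\<lambda>A. LCv A (brkc y c)"], rule ext)
             (use IHt in \<open>simp add: Rel_def F_def B_def\<close>)
        have "lext (act x) (act y \<sigma>) - lext (act y) (act x \<sigma>)
           = lext (act c) (lext (act x) G - lext (act y) F)
             + (LCv (\<lambda>g. lext (act g) G) (brkc x c) - LCv (\<lambda>g. lext (act y) (B g)) (brkc x c))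
             + (LCv (\<lambda>g. lext (act x) (B g)) (brkc y c) - LCv (\<lambda>g. lext (act g) F) (brkc y c))"
          unfolding T1 T2 lext_diff[OF fin_lext[OF fF(1)] fin_lext[OF fF(2)]]
          by (simp add: lext_diff fF fin_lext fa algebra_simps)
        also have "\<dots> = lext (act c) (LCv B (brkc x y)) + LCv (\<lambda>g. LCv B (brkc g y)) (brkc x c)
             + LCv (\<lambda>g. LCv B (brkc x g)) (brkc y c)"
          unfolding D1 D2 D3 ..
        also have "\<dots> = LCv (\<lambda>g. lext (act c) (B g)) (brkc x y) + LCv (\<lambda>g. LCv B (brkc g c)) (brkc x y)"
          by (simp add: lext_LCv B_def fa add.assoc LCv_jacobi)
        also have "\<dots> = LCv (\<lambda>g. act g \<sigma>) (brkc x y)"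
          unfolding LCv_add[symmetric] Cons B_def using Star[OF s] by simp
        finally show ?thesis unfolding Rel_def .
      qed
    qed
  qed
qed

end

lemma spanS_zero': "0 \<in> spanS S"
  using spanS.zero[of S] by (simp add: zero_fun_def)

lemma spanS_add': "f \<in> spanS S \<Longrightarrow> g \<in> spanS S \<Longrightarrow> f + g \<in> spanS S"
  using spanS.add[of f S g] by (simp add: plus_fun_def)

lemma spanS_sc: "f \<in> spanS S \<Longrightarrow> sc a (f :: 'b \<Rightarrow> 'a::field_char_0) \<in> spanS S"
  using spanS.smul[of f S a] by (simp add: sc_def)

lemma spanS_uminus: "f \<in> spanS S \<Longrightarrow> - (f :: 'b \<Rightarrow> 'a::field_char_0) \<in> spanS S"
  using spanS_sc[of f S "-1"] by (simp add: sc_def fun_Compl_def)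

lemma spanS_diff: "f \<in> spanS S \<Longrightarrow> g \<in> spanS S \<Longrightarrow> f - (g :: 'b \<Rightarrow> 'a::field_char_0) \<in> spanS S"
  using spanS_add'[OF _ spanS_uminus, of f S g] by simp

lemma spanS_sum: "finite I \<Longrightarrow> (\<And>i. i \<in> I \<Longrightarrow> G i \<in> spanS S) \<Longrightarrow> (\<lambda>v. \<Sum>i\<in>I. a i * (G i v :: 'a::field_char_0)) \<in> spanS S"
proof (induction I rule: finite_induct)
  case empty then show ?case using spanS.zero by simp
next
  case (insert i I)
  have "(\<lambda>v. \<Sum>i\<in>insert i I. a i * G i v) = sc (a i) (G i) + (\<lambda>v. \<Sum>i\<in>I. a i * G i v)"
    using insert by (simp add: fun_eq_iff sc_def)
  then show ?case using insert by (auto intro!: spanS_add' spanS_sc)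
qed

lemma spanS_lext: "fin F \<Longrightarrow> (\<And>\<rho>. F \<rho> \<noteq> 0 \<Longrightarrow> H \<rho> \<in> spanS S) \<Longrightarrow> lext H F \<in> spanS S"
  unfolding lext_def fin_def by (rule spanS_sum) auto

lemma spanS_LCv: "(\<And>g. A g \<in> spanS S) \<Longrightarrow> LCv A xs \<in> spanS S"
proof (induction xs)
  case Nil then show ?case by (simp add: spanS.zero)
next
  case (Cons p xs)
  obtain g a where p: "p = (g, a)" by (cases p)
  have "sc a (A g) + LCv A xs \<in> spanS S" using Cons by (auto intro!: spanS_add' spanS_sc)
  then show ?case by (simp only: p LCv_simps)
qed

lemma fin_spanS: "f \<in> spanS S \<Longrightarrow> (\<And>g. g \<in> S \<Longrightarrow> fin (g::'b \<Rightarrow> 'a::field_char_0)) \<Longrightarrow> fin f"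
proof (induction rule: spanS.induct)
  case zero then show ?case using fin_zero by (simp add: zero_fun_def)
next
  case (add f g) then show ?case using fin_add[of f g] by (simp add: plus_fun_def)
next
  case (smul f c) then show ?case using fin_sc[of f c] by (simp add: sc_def)
qed auto

section \<open>Left multiplication\<close>

lemma lmul_sgl: "lmul g (sgl w a) = sgl (g # w) a"
  by (auto simp: lmul_def sgl_def fun_eq_iff split: list.splits)

lemma lmul_add: "lmul g (F + G) = lmul g F + lmul g G"
  by (auto simp: lmul_def fun_eq_iff split: list.splits)
lemma lmul_diff: "lmul g (F - G) = lmul g F - lmul g G"
  by (auto simp: lmul_def fun_eq_iff split: list.splits)
lemma lmul_sc: "lmul g (sc a F) = sc a (lmul g F)"
  by (auto simp: lmul_def fun_eq_iff split: list.splits)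
lemma lmul_zero: "lmul g (\<lambda>_. 0) = (\<lambda>_. 0)"
  by (auto simp: lmul_def fun_eq_iff split: list.splits)
lemma lmul_LCv: "lmul g (LCv A xs) = LCv (\<lambda>h. lmul g (A h)) xs"
  by (induction xs) (auto simp: lmul_add lmul_sc lmul_zero)

lemma sgl_scale: "sgl w c v = c * sgl w 1 v" by (simp add: sgl_def)

lemma rel_comm_vec: "rel_comm u x y w =
   sgl (u @ [x, y] @ w) 1 - sgl (u @ [y, x] @ w) 1 - LCv (\<lambda>g. sgl (u @ [g] @ w) 1) (brkc x y)"
proof -
  have "sum_list (map (\<lambda>(g, c). sgl (u @ [g] @ w) c v) xs) = LCv (\<lambda>g. sgl (u @ [g] @ w) 1) xs v"
    for v and xs :: "(gen \<times> 'a::field_char_0) list"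
    by (induction xs) (auto simp: sgl_def)
  then show ?thesis by (simp add: rel_comm_def fun_eq_iff)
qed

lemma lmul_rel_comm: "lmul g (rel_comm u x y w :: gen list \<Rightarrow> 'a::field_char_0) = rel_comm (g # u) x y w"
  unfolding rel_comm_vec lmul_diff lmul_LCv lmul_sgl by simp

lemma lmul_lext: "fin F \<Longrightarrow> lmul c F = lext (\<lambda>\<rho>. sgl (c # \<rho>) 1) F"
proof (rule ext)
  fix v assume f: "fin F"
  show "lmul c F v = lext (\<lambda>\<rho>. sgl (c # \<rho>) 1) F v"
  proof (cases v)
    case Nil then show ?thesis by (simp add: lmul_def lext_def sgl_def)
  next
    case (Cons d v')
    have "lext (\<lambda>\<rho>. sgl (c # \<rho>) 1) F v = (\<Sum>\<rho>\<in>supp F. if \<rho> = v' \<and> d = c then F v' else 0)"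
      unfolding lext_def Cons by (rule sum.cong) (auto simp: sgl_def)
    also have "\<dots> = (if d = c then F v' else 0)"
      using f by (auto simp: fin_def sum.delta')
    finally show ?thesis by (simp add: lmul_def Cons)
  qed
qed

section \<open>The kernel\<close>

definition NSgen :: "(gen \<Rightarrow> 'a::field option) \<Rightarrow> (gen list \<Rightarrow> 'a) set" where
  "NSgen ch = ({rel_comm u x y w | u x y w. True}
      \<union> {(\<lambda>v. sgl (u @ [h]) 1 v - sgl u c v) | u h c. ch h = Some c})"

definition NS :: "(gen \<Rightarrow> 'a::field option) \<Rightarrow> (gen list \<Rightarrow> 'a) set" where
  "NS ch = spanS (NSgen ch)"

lemma Nsub_NS: "Nsub Mv s cL cM = NS (chi Mv s cL cM)"
  by (simp add: Nsub_def NS_def NSgen_def)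

lemma NS_lmul: "f \<in> NS ch \<Longrightarrow> lmul g (f :: gen list \<Rightarrow> 'a::field_char_0) \<in> NS ch"
  unfolding NS_def NSgen_def
proof (induction rule: spanS.induct)
  case zero then show ?case by (simp add: lmul_zero spanS.zero)
next
  case (base f)
  then show ?case
  proof
    assume "f \<in> {rel_comm u x y w | u x y w. True}"
    then obtain u x y w where "f = rel_comm u x y w" by auto
    then show ?thesis by (auto intro!: spanS.base simp: lmul_rel_comm)
  next
    assume "f \<in> {(\<lambda>v. sgl (u @ [h]) 1 v - sgl u c v) | u h c. ch h = Some c}"
    then obtain u h c where f: "f = (\<lambda>v. sgl (u @ [h]) 1 v - sgl u c v)" "ch h = Some c" by auto
    have e: "lmul g f = (\<lambda>v. sgl ((g # u) @ [h]) 1 v - sgl (g # u) c v)"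
      using lmul_diff[of g "sgl (u @ [h]) 1" "sgl u c"] by (simp add: f lmul_sgl fun_Compl_def fun_diff_def)
    have m: "(\<lambda>v. sgl ((g # u) @ [h]) 1 v - sgl (g # u) c v) \<in> {(\<lambda>v. sgl (u @ [h]) 1 v - sgl u c v) | u h c. ch h = Some c}"
      using f(2) by blast
    show ?thesis unfolding e by (rule spanS.base, rule UnI2, rule m)
  qed
next
  case (add f h)
  have "lmul g (\<lambda>v. f v + h v) = (\<lambda>v. lmul g f v + lmul g h v)"
    by (auto simp: lmul_def fun_eq_iff split: list.splits)
  then show ?case using add by (simp add: spanS.add)
next
  case (smul f c)
  have "lmul g (\<lambda>v. c * f v) = (\<lambda>v. c * lmul g f v)"
    by (auto simp: lmul_def fun_eq_iff split: list.splits)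
  then show ?case using smul by (simp add: spanS.smul)
qed

lemma fin_NSgen: "g \<in> NSgen ch \<Longrightarrow> fin (g :: gen list \<Rightarrow> 'a::field_char_0)"
  unfolding NSgen_def
proof -
  assume "g \<in> {rel_comm u x y w | u x y w. True} \<union> {(\<lambda>v. sgl (u @ [h]) 1 v - sgl u c v) | u h c. ch h = Some c}"
  then show "fin g"
  proof
    assume "g \<in> {rel_comm u x y w | u x y w. True}"
    then obtain u x y w where "g = rel_comm u x y w" by blast
    then show ?thesis unfolding rel_comm_vec by (simp add: fin_diff fin_LCv)
  next
    assume "g \<in> {(\<lambda>v. sgl (u @ [h]) 1 v - sgl u c v) | u h c. ch h = Some c}"
    then obtain u h c where "g = (\<lambda>v. sgl (u @ [h]) 1 v - sgl u c v)" by blast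
    then have "g = sgl (u @ [h]) 1 - sgl u c" by (simp add: fun_diff_def)
    then show ?thesis by (simp add: fin_diff)
  qed
qed

lemma fin_NS: "f \<in> NS ch \<Longrightarrow> fin (f :: gen list \<Rightarrow> 'a::field_char_0)"
  unfolding NS_def by (erule fin_spanS) (rule fin_NSgen)


fun pwv :: "(gen \<Rightarrow> 'a::field_char_0 option) \<Rightarrow> gen list \<Rightarrow> (gen list \<Rightarrow> 'a) \<Rightarrow> gen list \<Rightarrow> 'a" where
  "pwv ch [] F = F"
| "pwv ch (g # u) F = lext (pact ch g) (pwv ch u F)"

definition Phi :: "(gen \<Rightarrow> 'a::field_char_0 option) \<Rightarrow> (gen list \<Rightarrow> 'a) \<Rightarrow> gen list \<Rightarrow> 'a" where
  "Phi ch f = lext (\<lambda>w. pwv ch w (sgl [] 1)) f"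

lemma fin_pwv: "fin F \<Longrightarrow> fin (pwv ch u F)"
  by (induction u) (auto intro!: fin_lext simp: fin_pact)

lemma pwv_append: "pwv ch (u @ w) F = pwv ch u (pwv ch w F)"
  by (induction u) auto

lemma pwv_diff: "fin F1 \<Longrightarrow> fin F2 \<Longrightarrow> pwv ch u (F1 - F2) = pwv ch u F1 - pwv ch u F2"
  by (induction u) (auto simp: lext_diff fin_pwv)

lemma pwv_sc: "pwv ch u (sc a F) = sc a (pwv ch u F)"
  by (induction u) (simp_all only: pwv.simps lext_sc)

lemma pwv_zero: "pwv ch u 0 = 0"
  by (induction u) (simp_all only: pwv.simps lext_zero)

lemma pwv_LCv: "(\<And>g. fin (A g)) \<Longrightarrow> pwv ch u (LCv A xs) = LCv (\<lambda>g. pwv ch u (A g)) xs"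
  by (induction u) (auto simp: lext_LCv fin_pwv)

lemma Phi_sgl: "Phi ch (sgl w a) = sc a (pwv ch w (sgl [] 1))"
  by (simp add: Phi_def)

lemma fin_Phi: "fin f \<Longrightarrow> fin (Phi ch f)"
  unfolding Phi_def by (auto intro!: fin_lext fin_pwv)

context pbw
begin

lemma srt_lext: "fin F \<Longrightarrow> (\<And>\<rho>. F \<rho> \<noteq> 0 \<Longrightarrow> srt \<rho>) \<Longrightarrow> lext (act g) F \<rho> \<noteq> 0 \<Longrightarrow> srt \<rho>"
proof -
  assume f: "fin F" and s: "\<And>\<rho>. F \<rho> \<noteq> 0 \<Longrightarrow> srt \<rho>" and r: "lext (act g) F \<rho> \<noteq> 0"
  then obtain \<rho>' where "F \<rho>' \<noteq> 0" "act g \<rho>' \<rho> \<noteq> 0" using supp_lext[of \<rho> "act g" F] by auto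
  then show "srt \<rho>" using LT s by blast
qed

lemma srt_pwv: "fin F \<Longrightarrow> (\<And>\<rho>. F \<rho> \<noteq> 0 \<Longrightarrow> srt \<rho>) \<Longrightarrow> pwv ch u F \<rho> \<noteq> 0 \<Longrightarrow> srt \<rho>"
proof (induction u arbitrary: \<rho>)
  case Nil then show ?case by simp
next
  case (Cons g u)
  have f: "fin (pwv ch u F)" using Cons.prems(1) by (rule fin_pwv)
  have s: "\<And>\<rho>. pwv ch u F \<rho> \<noteq> 0 \<Longrightarrow> srt \<rho>" using Cons.IH Cons.prems(1,2) by blast
  have "lext (act g) (pwv ch u F) \<rho> \<noteq> 0" using Cons.prems(3) by simp
  then show ?case using srt_lext[of "pwv ch u F" g \<rho>] f s by blast
qed

lemma Rel_vec: "fin F \<Longrightarrow> (\<And>\<rho>. F \<rho> \<noteq> 0 \<Longrightarrow> srt \<rho>) \<Longrightarrow>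
  lext (act x) (lext (act y) F) - lext (act y) (lext (act x) F) = LCv (\<lambda>g. lext (act g) F) (brkc x y)"
proof -
  assume f: "fin F" and s: "\<And>\<rho>. F \<rho> \<noteq> 0 \<Longrightarrow> srt \<rho>"
  have "lext (act x) (lext (act y) F) - lext (act y) (lext (act x) F)
      = lext (\<lambda>\<rho>. lext (act x) (act y \<rho>)) F - lext (\<lambda>\<rho>. lext (act y) (act x \<rho>)) F"
    using f by (simp add: lext_lext fin_pact)
  also have "\<dots> = lext (\<lambda>\<rho>. lext (act x) (act y \<rho>) - lext (act y) (act x \<rho>)) F"
    by (rule lext_Gdiff[symmetric])
  also have "\<dots> = lext (\<lambda>\<rho>. LCv (\<lambda>g. act g \<rho>) (brkc x y)) F"
    by (rule lext_cong) (use Rel_main s in \<open>auto simp: Rel_def\<close>)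
  also have "\<dots> = LCv (\<lambda>g. lext (act g) F) (brkc x y)" by (rule lext_GLCv)
  finally show ?thesis .
qed

abbreviation pw where "pw w \<equiv> pwv ch w (sgl [] 1)"

lemma fin_pw: "fin (pw w)" by (simp add: fin_pwv)
lemma srt_pw: assumes "pw w \<rho> \<noteq> 0" shows "srt \<rho>"
proof (rule srt_pwv[OF fin_sgl _ assms])
  fix \<rho>' :: "gen list" assume "sgl [] (1::'a) \<rho>' \<noteq> 0"
  then have "\<rho>' = []" by (simp add: sgl_def split: if_splits)
  then show "srt \<rho>'" by simp
qed

lemma Phi_gen: "g \<in> NSgen ch \<Longrightarrow> Phi ch g = 0"
  unfolding NSgen_def
proof -
  assume "g \<in> {rel_comm u x y w | u x y w. True} \<union> {(\<lambda>v. sgl (u @ [h]) 1 v - sgl u c v) | u h c. ch h = Some c}"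
  then show "Phi ch g = 0"
  proof
    assume "g \<in> {rel_comm u x y w | u x y w. True}"
    then obtain u x y w where g: "g = rel_comm u x y w" by blast
    define P where "P = pw w"
    have fP: "fin P" by (simp add: P_def fin_pw)
    have sP: "\<And>\<rho>. P \<rho> \<noteq> 0 \<Longrightarrow> srt \<rho>" using srt_pw by (simp add: P_def)
    have e1: "Phi ch (sgl (u @ [x, y] @ w) 1) = pwv ch u (lext (act x) (lext (act y) P))"
      by (simp add: Phi_sgl pwv_append P_def)
    have e2: "Phi ch (sgl (u @ [y, x] @ w) 1) = pwv ch u (lext (act y) (lext (act x) P))"
      by (simp add: Phi_sgl pwv_append P_def)
    have e3: "Phi ch (LCv (\<lambda>g. sgl (u @ [g] @ w) 1) (brkc x y)) = pwv ch u (LCv (\<lambda>g. lext (act g) P) (brkc x y))"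
    proof -
      have "Phi ch (LCv (\<lambda>g. sgl (u @ [g] @ w) 1) (brkc x y)) = LCv (\<lambda>g. Phi ch (sgl (u @ [g] @ w) 1)) (brkc x y)"
        unfolding Phi_def by (rule lext_LCv) simp
      also have "\<dots> = LCv (\<lambda>g. pwv ch u (lext (act g) P)) (brkc x y)"
        by (simp add: Phi_sgl pwv_append P_def)
      also have "\<dots> = pwv ch u (LCv (\<lambda>g. lext (act g) P) (brkc x y))"
        by (rule pwv_LCv[symmetric]) (intro fin_lext fP fin_pact)
      finally show ?thesis .
    qed
    have "Phi ch g = Phi ch (sgl (u @ [x, y] @ w) 1) - Phi ch (sgl (u @ [y, x] @ w) 1)
        - Phi ch (LCv (\<lambda>g. sgl (u @ [g] @ w) 1) (brkc x y))"
      unfolding g rel_comm_vec Phi_def by (simp add: lext_diff fin_diff fin_LCv)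
    also have "\<dots> = pwv ch u (lext (act x) (lext (act y) P) - lext (act y) (lext (act x) P)
        - LCv (\<lambda>g. lext (act g) P) (brkc x y))"
      unfolding e1 e2 e3 by (simp add: pwv_diff fin_diff fin_LCv fin_lext fin_pact fP)
    also have "\<dots> = 0" using Rel_vec[OF fP sP] by (simp add: pwv_zero)
    finally show ?thesis .
  next
    assume "g \<in> {(\<lambda>v. sgl (u @ [h]) 1 v - sgl u c v) | u h c. ch h = Some c}"
    then obtain u h c where g: "g = sgl (u @ [h]) 1 - sgl u c" and hc: "ch h = Some c"
      by (auto simp: fun_diff_def)
    have "Phi ch g = Phi ch (sgl (u @ [h]) 1) - Phi ch (sgl u c)"
      unfolding g Phi_def by (simp add: lext_diff)
    also have "Phi ch (sgl (u @ [h]) 1) = pwv ch u (act h [])"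
      by (simp add: Phi_sgl pwv_append)
    also have "act h [] = sc c (sgl [] 1)" using hc by (simp add: sc_def sgl_def fun_eq_iff)
    also have "Phi ch (sgl u c) = sc c (pw u)" by (simp add: Phi_sgl)
    finally have "Phi ch g = pwv ch u (sc c (sgl [] 1)) - sc c (pw u)" .
    then show ?thesis by (simp only: pwv_sc diff_self)
  qed
qed

lemma Phi_NS: "f \<in> NS ch \<Longrightarrow> Phi ch f = 0"
  unfolding NS_def
proof (induction rule: spanS.induct)
  case zero then show ?case by (simp add: Phi_def lext_def supp_def fun_eq_iff)
next
  case (base f) then show ?case by (rule Phi_gen)
next
  case (add f g)
  have "fin f" "fin g" using add fin_spanS fin_NSgen by blast+
  have "Phi ch (\<lambda>v. f v + g v) = Phi ch f + Phi ch g"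
    unfolding Phi_def using lext_add[OF \<open>fin f\<close> \<open>fin g\<close>] by (simp only: plus_fun_def)
  then show ?case using add.IH by (simp add: fun_eq_iff)
next
  case (smul f c)
  have "Phi ch (\<lambda>v. c * f v) = sc c (Phi ch f)"
    unfolding Phi_def using lext_sc[of _ c f] by (simp only: sc_def)
  then show ?case using smul.IH by (simp add: fun_eq_iff)
qed

end

context pbw
begin

lemma NS_zero: "0 \<in> NS ch" unfolding NS_def by (rule spanS_zero')
lemma NS_zero': "(\<lambda>_. 0) \<in> NS ch" unfolding NS_def by (rule spanS.zero)
lemma NS_add: "f \<in> NS ch \<Longrightarrow> g \<in> NS ch \<Longrightarrow> f + g \<in> NS ch" unfolding NS_def by (rule spanS_add')
lemma NS_gen: "f \<in> NSgen ch \<Longrightarrow> f \<in> NS ch" unfolding NS_def by (rule spanS.base)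

lemma word_sorted: "srt \<sigma> \<Longrightarrow> sgl (g # \<sigma>) 1 - act g \<sigma> \<in> NS ch"
proof (induction "length \<sigma>" arbitrary: g \<sigma> rule: less_induct)
  case less
  show ?case
  proof (cases \<sigma>)
    case Nil
    show ?thesis
    proof (cases "ch g")
      case None
      then show ?thesis using Nil NS_zero by simp
    next
      case (Some a)
      have "(\<lambda>v. sgl ([] @ [g]) 1 v - sgl [] a v) \<in> NSgen ch"
        unfolding NSgen_def using Some by blast
      then have "(\<lambda>v. sgl ([] @ [g]) 1 v - sgl [] a v) \<in> NS ch" by (rule NS_gen)
      then show ?thesis using Nil Some by (simp add: fun_diff_def)
    qed
  next
    case (Cons c t)
    have s: "srt (c # t)" using less Cons by simp
    have sc: "ch c = None" "\<forall>y\<in>set t. key c \<le> key y" "srt t" using s by (auto simp: srt_Cons)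
    have IH: "sgl (h # t) 1 - act h t \<in> NS ch" for h using less.hyps[of t h] Cons sc by auto
    show ?thesis
    proof (cases "ch g = None \<and> key g \<le> key c")
      case True
      then show ?thesis using Cons NS_zero by (simp add: pact_Cons_prep)
    next
      case gb: False
      have X1: "rel_comm [] g c t \<in> NS ch"
        by (rule NS_gen) (auto simp: NSgen_def)
      have X2: "lmul c (sgl (g # t) 1 - act g t) \<in> NS ch" using IH NS_lmul by blast
      have X3: "lext (\<lambda>\<rho>. sgl (c # \<rho>) 1 - act c \<rho>) (act g t) \<in> NS ch"
        unfolding NS_def
      proof (rule spanS_lext[OF fin_pact])
        fix \<rho> assume r: "act g t \<rho> \<noteq> 0"
        have l: "srt \<rho> \<and> (length \<rho> \<le> length t \<or> (length \<rho> = Suc (length t) \<and> ch g = None \<and> set \<rho> \<subseteq> insert g (set t)))"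
          using LT[OF sc(3) r] .
        show "sgl (c # \<rho>) 1 - act c \<rho> \<in> spanS (NSgen ch)"
        proof (cases "length \<rho> \<le> length t")
          case True
          then show ?thesis using less.hyps[of \<rho> c] l Cons by (auto simp: NS_def)
        next
          case False
          then have "ch g = None" "set \<rho> \<subseteq> insert g (set t)" using l by auto
          then have "\<forall>z\<in>set \<rho>. key c \<le> key z" using gb sc by auto
          then have "act c \<rho> = sgl (c # \<rho>) 1" using Pre sc by auto
          then show ?thesis using spanS_zero' by simp
        qed
      qed
      have X4: "LCv (\<lambda>h. sgl (h # t) 1 - act h t) (brkc g c) \<in> NS ch"
        unfolding NS_def by (rule spanS_LCv) (use IH in \<open>simp add: NS_def\<close>)
      have eq: "sgl (g # \<sigma>) 1 - act g \<sigma> =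
          rel_comm [] g c t + lmul c (sgl (g # t) 1 - act g t)
          + lext (\<lambda>\<rho>. sgl (c # \<rho>) 1 - act c \<rho>) (act g t) + LCv (\<lambda>h. sgl (h # t) 1 - act h t) (brkc g c)"
      proof -
        have a: "act g (c # t) = lext (act c) (act g t) + LCv (\<lambda>h. act h t) (brkc g c)"
          by (rule Rec[OF s gb])
        have b: "lext (\<lambda>\<rho>. sgl (c # \<rho>) 1 - act c \<rho>) (act g t) = lmul c (act g t) - lext (act c) (act g t)"
          by (simp add: lext_Gdiff lmul_lext fin_pact)
        show ?thesis unfolding a b rel_comm_vec lmul_diff lmul_sgl LCv_diff Cons
          by (simp add: algebra_simps)
      qed
      show ?thesis unfolding eq by (intro NS_add X1 X2 X3 X4)
    qed
  qed
qed

lemma word_pw: "sgl w 1 - pw w \<in> NS ch"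
proof (induction w)
  case Nil then show ?case using NS_zero NS_zero' by simp
next
  case (Cons g w)
  have A: "lmul g (sgl w 1 - pw w) \<in> NS ch" using Cons NS_lmul by blast
  have B: "lext (\<lambda>\<rho>. sgl (g # \<rho>) 1 - act g \<rho>) (pw w) \<in> NS ch"
    unfolding NS_def
  proof (rule spanS_lext[OF fin_pw])
    fix \<rho> assume "pw w \<rho> \<noteq> 0"
    then have "srt \<rho>" by (rule srt_pw)
    then show "sgl (g # \<rho>) 1 - act g \<rho> \<in> spanS (NSgen ch)" using word_sorted by (simp add: NS_def)
  qed
  have e: "sgl (g # w) 1 - pw (g # w) = lmul g (sgl w 1 - pw w) + lext (\<lambda>\<rho>. sgl (g # \<rho>) 1 - act g \<rho>) (pw w)"
    by (simp add: lext_Gdiff lmul_lext fin_pw lmul_diff lmul_sgl)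
  show ?case unfolding e by (rule NS_add[OF A B])
qed

lemma vec_word: "fin f \<Longrightarrow> f - Phi ch f \<in> NS ch"
proof -
  assume f: "fin f"
  have e: "f = lext (\<lambda>w. sgl w 1) f"
    using sum_vec_eq[of "supp f" f] f by (simp add: fin_def lext_def)
  have "f - Phi ch f = lext (\<lambda>w. sgl w 1 - pw w) f"
    by (subst (1) e) (simp add: Phi_def lext_Gdiff)
  also have "\<dots> \<in> NS ch" unfolding NS_def
    by (rule spanS_lext[OF f]) (use word_pw in \<open>simp add: NS_def\<close>)
  finally show ?thesis .
qed

lemma Phi_lmul: "fin f \<Longrightarrow> Phi ch (lmul g f) = lext (act g) (Phi ch f)"
proof -
  assume f: "fin f"
  have "Phi ch (lmul g f) = lext (\<lambda>w. pw w) (lext (\<lambda>\<rho>. sgl (g # \<rho>) 1) f)"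
    by (simp add: Phi_def lmul_lext f)
  also have "\<dots> = lext (\<lambda>\<rho>. pw (g # \<rho>)) f"
    by (simp add: lext_lext f lext_sgl1)
  also have "\<dots> = lext (\<lambda>\<rho>. lext (act g) (pw \<rho>)) f" by simp
  also have "\<dots> = lext (act g) (Phi ch f)"
    unfolding Phi_def by (rule lext_lext[symmetric]) (use f fin_pw in auto)
  finally show ?thesis .
qed

end

definition short :: "(gen list \<Rightarrow> 'a::field_char_0) \<Rightarrow> nat \<Rightarrow> bool" where
  "short F n \<longleftrightarrow> (\<forall>\<rho>. F \<rho> \<noteq> 0 \<longrightarrow> length \<rho> < n)"

lemma short_add: "short F n \<Longrightarrow> short G n \<Longrightarrow> short (F + G) n"
  unfolding short_def by (metis add.right_neutral plus_fun_apply)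
lemma short_diff: "short F n \<Longrightarrow> short G n \<Longrightarrow> short (F - G) n"
  unfolding short_def by (metis diff_zero fun_diff_def)
lemma short_sc: "short F n \<Longrightarrow> short (sc a F) n"
  by (auto simp: short_def)
lemma short_zero: "short 0 n" by (auto simp: short_def)
lemma short_zero': "short (\<lambda>_. 0) n" by (auto simp: short_def)
lemma short_mono: "short F n \<Longrightarrow> n \<le> m \<Longrightarrow> short F m"
  by (force simp: short_def)
lemma short_sgl: "length w < n \<Longrightarrow> short (sgl w a) n"
  by (auto simp: short_def sgl_def)
lemma short_lmul: "short F (n - 1) \<Longrightarrow> short (lmul c F) n"
  unfolding short_def
proof (intro allI impI)
  fix \<rho> assume a: "\<forall>\<rho>. F \<rho> \<noteq> 0 \<longrightarrow> length \<rho> < n - 1" and b: "lmul c F \<rho> \<noteq> 0"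
  then obtain d \<rho>' where r: "\<rho> = d # \<rho>'" "F \<rho>' \<noteq> 0"
    by (cases \<rho>) (auto simp: lmul_def split: if_splits)
  then have "length \<rho>' < n - 1" using a by blast
  then show "length \<rho> < n" using r by simp
qed

locale pbwM = pbw ch for ch :: "gen \<Rightarrow> 'a::field_char_0 option" +
  fixes Mv cM :: 'a
  assumes chM: "ch (M k) = Some (if k = 0 then Mv else 0)"
  and chCM: "ch CM = Some cM"
  and chL0: "ch (L 0) \<noteq> None"
begin

definition lam :: "int \<Rightarrow> 'a" where
  "lam i = - (2 * of_int i * Mv) - of_int (i ^ 3 - i) / 12 * cM"

lemma C_nz: "ch g = None \<Longrightarrow> \<exists>i. g = L i \<and> i \<noteq> 0"
proof -
  assume a: "ch g = None"
  then obtain i where g: "g = L i" using C_L by blast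
  have "i \<noteq> 0"
  proof
    assume "i = 0" then have "ch g = ch (L 0)" using g by simp
    then show False using a chL0 by simp
  qed
  then show ?thesis using g by blast
qed

lemma act_CM: "srt t \<Longrightarrow> act CM t = sc cM (sgl t 1)"
proof (induction t)
  case Nil then show ?case using chCM by (simp add: sc_def sgl_def fun_eq_iff)
next
  case (Cons c t)
  have sc: "ch c = None" "\<forall>y\<in>set t. key c \<le> key y" "srt t" using Cons.prems by (auto simp: srt_Cons)
  have e1: "act CM (c # t) = lext (act c) (act CM t) + LCv (\<lambda>g. act g t) (brkc CM c)"
    using Rec[OF Cons.prems] chCM by simp
  have e2: "LCv (\<lambda>g. act g t) (brkc CM c) = 0" by simp
  have e3: "lext (act c) (act CM t) = sc cM (act c t)"
    by (simp only: Cons.IH[OF sc(3)] lext_sc lext_sgl1)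
  have e4: "act c t = sgl (c # t) 1" using Pre sc by simp
  show ?case by (simp only: e1 e2 e3 e4 add_0_right)
qed

lemma Msupp: "srt t \<Longrightarrow> act (M k) t \<rho> \<noteq> 0 \<Longrightarrow> set \<rho> \<subseteq> set t"
proof (induction t arbitrary: k \<rho>)
  case Nil then show ?case using chM[of k] by (auto simp: sgl_def split: if_splits)
next
  case (Cons c t)
  have sc: "ch c = None" "\<forall>y\<in>set t. key c \<le> key y" "srt t" using Cons.prems by (auto simp: srt_Cons)
  obtain i where ci: "c = L i" using C_nz[OF sc(1)] by auto
  have e: "act (M k) (c # t) = lext (act c) (act (M k) t) + LCv (\<lambda>g. act g t) (brkc (M k) c)"
    using Rec[OF Cons.prems(1)] chM by simp
  have "(lext (act c) (act (M k) t) + LCv (\<lambda>g. act g t) (brkc (M k) c)) \<rho> \<noteq> 0"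
    using Cons.prems(2) e by simp
  then have "lext (act c) (act (M k) t) \<rho> \<noteq> 0 \<or> LCv (\<lambda>g. act g t) (brkc (M k) c) \<rho> \<noteq> 0" by auto
  then show ?case
  proof
    assume "lext (act c) (act (M k) t) \<rho> \<noteq> 0"
    then obtain \<rho>' where r: "act (M k) t \<rho>' \<noteq> 0" "act c \<rho>' \<rho> \<noteq> 0"
      using supp_lext[of \<rho> "act c" "act (M k) t"] by auto
    have "set \<rho>' \<subseteq> set t" using Cons.IH[OF sc(3) r(1)] .
    then have "act c \<rho>' = sgl (c # \<rho>') 1" using sc(2) by (intro Pre[OF sc(1)]) blast
    then have "\<rho> = c # \<rho>'" using r(2) by (auto simp: sgl_def split: if_splits)
    then show ?thesis using \<open>set \<rho>' \<subseteq> set t\<close> by auto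
  next
    assume a: "LCv (\<lambda>g. act g t) (brkc (M k) c) \<rho> \<noteq> 0"
    have "LCv (\<lambda>g. act g t) (brkc (M k) c) = sc (- of_int (i - k)) (act (M (i + k)) t)
       + (if k = - i then sc (- (of_int (i ^ 3 - i) / 12)) (act CM t) else 0)"
      by (simp add: ci)
    then have "act (M (i + k)) t \<rho> \<noteq> 0 \<or> act CM t \<rho> \<noteq> 0" using a by (auto split: if_splits)
    then show ?thesis
    proof
      assume "act (M (i + k)) t \<rho> \<noteq> 0"
      then show ?thesis using Cons.IH[OF sc(3)] by auto
    next
      assume "act CM t \<rho> \<noteq> 0"
      then have "\<rho> = t" using act_CM[OF sc(3)] by (auto simp: sgl_def split: if_splits)
      then show ?thesis by auto
    qed
  qed
qed

lemma act_M_rec: "srt (c # t) \<Longrightarrow>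
  act (M k) (c # t) = lmul c (act (M k) t) + LCv (\<lambda>g. act g t) (brkc (M k) c)"
proof -
  assume s: "srt (c # t)"
  have sc: "ch c = None" "\<forall>y\<in>set t. key c \<le> key y" "srt t" using s by (auto simp: srt_Cons)
  have "lext (act c) (act (M k) t) = lext (\<lambda>\<rho>. sgl (c # \<rho>) 1) (act (M k) t)"
  proof (rule lext_cong)
    fix \<rho> assume "act (M k) t \<rho> \<noteq> 0"
    then have "set \<rho> \<subseteq> set t" using Msupp[OF sc(3)] by auto
    then show "act c \<rho> = sgl (c # \<rho>) 1" using sc(2) by (intro Pre[OF sc(1)]) blast
  qed
  then show ?thesis using Rec[OF s] chM by (simp add: lmul_lext fin_pact)
qed

end

lemma short_allzero: "(\<And>\<rho>. F \<rho> = 0) \<Longrightarrow> short F n" by (simp add: short_def)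

context pbwM
begin

definition EE :: "int \<Rightarrow> gen list \<Rightarrow> gen list \<Rightarrow> 'a" where
  "EE k t = sc (lam (- k) * of_nat (count (mset t) (L (- k)))) (sgl (remove1 (L (- k)) t) 1)"

lemma EE_short: "short (EE k t) (length t)"
proof (cases "L (- k) \<in> set t")
  case True
  then have "length (remove1 (L (- k)) t) < length t"
    using length_pos_if_in_set[OF True] by (simp add: length_remove1)
  then show ?thesis unfolding EE_def by (intro short_sc short_sgl)
next
  case False
  then have "count (mset t) (L (- k)) = 0" by (simp add: count_mset_0_iff)
  then show ?thesis unfolding EE_def by (intro short_allzero) simp
qed

lemma srt_head_remove: "srt (L i # t) \<Longrightarrow> L i \<in> set t \<Longrightarrow> L i # remove1 (L i) t = t"
proof (cases t)
  case (Cons d t')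
  assume s: "srt (L i # t)" and m: "L i \<in> set t"
  have s1: "\<forall>y\<in>set t. i \<le> key y" "srt t" using s by (auto simp: srt_Cons)
  have s2: "ch d = None" "\<forall>y\<in>set t'. key d \<le> key y" using s1(2) Cons by (auto simp: srt_Cons)
  show ?thesis
  proof (cases "d = L i")
    case True then show ?thesis using Cons by simp
  next
    case False
    then have "L i \<in> set t'" using m Cons by simp
    then have "key d \<le> i" using s2 by force
    moreover have "i \<le> key d" using s1 Cons by simp
    ultimately have "key d = key (L i)" by simp
    moreover have "ch (L i) = None" using s by (simp add: srt_Cons)
    ultimately have "d = L i" using key_inj s2(1) by blast
    then show ?thesis using False by simp
  qed
qed simp

lemma lmul_EE_same: "srt (L i # t) \<Longrightarrow>
  sc a (sgl (L i # remove1 (L i) t) 1) = sc a (sgl t 1) \<or> count (mset t) (L i) = 0"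
  using srt_head_remove by (cases "L i \<in> set t") (auto simp: count_mset_0_iff)

lemma M_lead: "srt t \<Longrightarrow> short (act (M 0) t - sc Mv (sgl t 1)) (length t) \<and>
   (\<forall>k. k \<noteq> 0 \<longrightarrow> short (act (M k) t - EE k t) (length t - 1))"
proof (induction t)
  case Nil
  have "act (M 0) [] - sc Mv (sgl [] 1) = 0" using chM[of 0] by (simp add: fun_eq_iff sgl_def)
  moreover have "act (M k) [] - EE k [] = 0" if "k \<noteq> 0" for k
    using chM[of k] that by (simp add: fun_eq_iff sgl_def EE_def)
  ultimately show ?case by (simp add: short_zero short_zero')
next
  case (Cons c t)
  have s: "srt (c # t)" using Cons.prems .
  have sc: "ch c = None" "\<forall>y\<in>set t. key c \<le> key y" "srt t" using s by (auto simp: srt_Cons)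
  obtain i where ci: "c = L i" "i \<noteq> 0" using C_nz[OF sc(1)] by auto
  note IH = Cons.IH[OF sc(3)]
  have IH0: "short (act (M 0) t - sc Mv (sgl t 1)) (length t)" using IH by (rule conjunct1)
  have IHk: "short (act (M k) t - EE k t) (length t - 1)" if "k \<noteq> 0" for k
    using IH that by blast
  have lc: "length (c # t) - 1 = length t" by simp
  have IHc: "short (act (M k) t) (length t)" if "k \<noteq> 0" for k
  proof -
    have "short (act (M k) t - EE k t) (length t - 1)" using IHk that by blast
    then have "short (act (M k) t - EE k t) (length t)" by (rule short_mono) simp
    from short_add[OF this EE_short[of k t]] show ?thesis by simp
  qed
  have rec: "act (M k) (c # t) = lmul c (act (M k) t) + sc (- of_int (i - k)) (act (M (i + k)) t)
      + (if k = - i then sc (- (of_int (i ^ 3 - i) / 12)) (sc cM (sgl t 1)) else 0)" for k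
    using act_M_rec[OF s, of k] act_CM[OF sc(3)] by (simp add: ci)
  have P0: "short (act (M 0) (c # t) - sc Mv (sgl (c # t) 1)) (length (c # t))"
  proof -
    have "act (M 0) (c # t) - sc Mv (sgl (c # t) 1) =
        lmul c (act (M 0) t - sc Mv (sgl t 1)) + sc (- of_int i) (act (M i) t)"
      using rec[of 0] ci by (simp add: lmul_diff lmul_sc lmul_sgl)
    moreover have "short (lmul c (act (M 0) t - sc Mv (sgl t 1))) (length (c # t))"
      using IH0 by (intro short_lmul) (simp only: lc)
    moreover have "short (sc (- of_int i) (act (M i) t)) (length (c # t))"
      using IHc[OF ci(2)] by (intro short_sc) (auto intro: short_mono)
    ultimately show ?thesis by (simp only: short_add)
  qed
  have Pk: "short (act (M k) (c # t) - EE k (c # t)) (length (c # t) - 1)" if k0: "k \<noteq> 0" for k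
  proof (cases "i = - k")
    case True
    then have kk: "k = - i" by simp
    have cnt: "count (mset (c # t)) (L i) = Suc (count (mset t) (L i))" using ci by simp
    have E1: "EE k (c # t) = sc (lam i * (of_nat (count (mset t) (L i)) + 1)) (sgl t 1)"
      unfolding EE_def kk using ci cnt by (simp add: add.commute)
    have E2: "lmul c (EE k t) = sc (lam i * of_nat (count (mset t) (L i))) (sgl t 1)"
    proof -
      have "lmul c (EE k t) = sc (lam i * of_nat (count (mset t) (L i))) (sgl (L i # remove1 (L i) t) 1)"
        unfolding EE_def kk using ci by (simp add: lmul_sc lmul_sgl)
      then show ?thesis using lmul_EE_same[of i t "lam i * of_nat (count (mset t) (L i))"] s ci
        by (auto simp: sc_def fun_eq_iff)
    qed
    have eq: "act (M k) (c # t) - EE k (c # t) =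
        lmul c (act (M k) t - EE k t) + sc (- of_int (2 * i)) (act (M 0) t - sc Mv (sgl t 1))"
      unfolding rec[of k] lmul_diff E1 E2 unfolding kk
      by (simp add: fun_eq_iff lam_def field_simps)
    have "short (lmul c (act (M k) t - EE k t)) (length (c # t) - 1)"
      using IHk[OF k0] by (intro short_lmul) (simp only: lc)
    moreover have "short (sc (- of_int (2 * i)) (act (M 0) t - sc Mv (sgl t 1))) (length (c # t) - 1)"
      using IH0 by (intro short_sc) (simp only: lc)
    ultimately show ?thesis unfolding eq by (rule short_add)
  next
    case False
    have E1: "EE k (c # t) = lmul c (EE k t)"
      unfolding EE_def using ci False by (auto simp: lmul_sc lmul_sgl)
    have ik: "i + k \<noteq> 0" using False by simp
    have eq: "act (M k) (c # t) - EE k (c # t) =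
        lmul c (act (M k) t - EE k t) + sc (- of_int (i - k)) (act (M (i + k)) t)"
      using False unfolding rec[of k] lmul_diff E1 by (simp add: fun_eq_iff algebra_simps)
    have "short (lmul c (act (M k) t - EE k t)) (length (c # t) - 1)"
      using IHk[OF k0] by (intro short_lmul) (simp only: lc)
    moreover have "short (sc (- of_int (i - k)) (act (M (i + k)) t)) (length (c # t) - 1)"
      using IHc[OF ik] by (intro short_sc) (simp only: lc)
    ultimately show ?thesis unfolding eq by (rule short_add)
  qed
  show ?case using P0 Pk by blast
qed

end

context pbwM
begin

lemma M_short: "k \<noteq> 0 \<Longrightarrow> srt t \<Longrightarrow> short (act (M k) t) (length t)"
proof -
  assume k: "k \<noteq> 0" and s: "srt t"
  have "short (act (M k) t - EE k t) (length t - 1)" using M_lead[OF s] k by blast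
  then have "short (act (M k) t - EE k t) (length t)" by (rule short_mono) simp
  from short_add[OF this EE_short[of k t]] show ?thesis by simp
qed

lemma map_L_key: "(\<forall>g\<in>set xs. ch g = None) \<Longrightarrow> map (\<lambda>j. L j) (map key xs) = xs"
proof (induction xs)
  case (Cons g xs)
  obtain j where "g = L j" using C_L Cons.prems by auto
  then show ?case using Cons by simp
qed simp

lemma uniq_remove: "srt \<rho> \<Longrightarrow> srt \<sigma> \<Longrightarrow> x \<in> set \<rho> \<Longrightarrow> x \<in> set \<sigma> \<Longrightarrow>
   remove1 x \<rho> = remove1 x \<sigma> \<Longrightarrow> \<rho> = \<sigma>"
proof -
  assume s: "srt \<rho>" "srt \<sigma>" and m: "x \<in> set \<rho>" "x \<in> set \<sigma>" and r: "remove1 x \<rho> = remove1 x \<sigma>"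
  have "mset \<rho> = add_mset x (mset (remove1 x \<rho>))" using m(1) by simp
  also have "\<dots> = add_mset x (mset (remove1 x \<sigma>))" using r by simp
  also have "\<dots> = mset \<sigma>" using m(2) by simp
  finally have "mset (map key \<rho>) = mset (map key \<sigma>)" by simp
  moreover have "sorted (map key \<rho>)" "sorted (map key \<sigma>)" using s by (auto simp: srt_def)
  ultimately have "map key \<rho> = map key \<sigma>"
    using properties_for_sort by metis
  then have "map (\<lambda>j. L j) (map key \<rho>) = map (\<lambda>j. L j) (map key \<sigma>)" by simp
  then show ?thesis using map_L_key s by (simp add: srt_def)
qed

lemma descent:
  assumes lamnz: "\<And>i. i \<noteq> 0 \<Longrightarrow> lam i \<noteq> 0"
    and f: "fin F" and sF: "\<And>\<rho>. F \<rho> \<noteq> 0 \<Longrightarrow> srt \<rho>"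
    and lF: "\<And>\<rho>. F \<rho> \<noteq> 0 \<Longrightarrow> length \<rho> \<le> Suc r"
    and s0: "F \<sigma>0 \<noteq> 0" and l0: "length \<sigma>0 = Suc r"
  shows "\<exists>k. lext (act (M k)) F \<noteq> 0 \<and> (\<forall>\<rho>. lext (act (M k)) F \<rho> \<noteq> 0 \<longrightarrow> length \<rho> \<le> r)"
proof -
  obtain c t0 where sig: "\<sigma>0 = c # t0" using l0 by (cases \<sigma>0) auto
  have ss0: "srt \<sigma>0" using sF s0 .
  then have "ch c = None" using sig by (simp add: srt_Cons)
  then obtain i where ci: "c = L i" "i \<noteq> 0" using C_nz by blast
  define k where "k = - i"
  have k0: "k \<noteq> 0" using ci by (simp add: k_def)
  define G where "G = lext (act (M k)) F"
  have lenG: "length \<rho> \<le> r" if "G \<rho> \<noteq> 0" for \<rho>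
  proof -
    have "\<rho> \<in> supp (lext (act (M k)) F)" using that by (simp add: G_def)
    from supp_lext[OF this] obtain \<rho>' where r': "F \<rho>' \<noteq> 0" "act (M k) \<rho>' \<rho> \<noteq> 0"
      by auto
    have "short (act (M k) \<rho>') (length \<rho>')" using M_short[OF k0 sF[OF r'(1)]] .
    then have "length \<rho> < length \<rho>'" using r'(2) by (simp add: short_def)
    then show ?thesis using lF[OF r'(1)] by simp
  qed
  define X where "X = lam i * of_nat (count (mset \<sigma>0) (L i))"
  have cnz: "count (mset \<sigma>0) (L i) \<noteq> 0" using sig ci by simp
  then have "(of_nat (count (mset \<sigma>0) (L i)) :: 'a) \<noteq> 0" by simp
  then have Xnz: "X \<noteq> 0" using lamnz[OF ci(2)] by (simp add: X_def)
  have trm: "act (M k) \<rho> t0 = (if \<rho> = \<sigma>0 then X else 0)" if "F \<rho> \<noteq> 0" for \<rho>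
  proof -
    have sr: "srt \<rho>" using sF that .
    have "short (act (M k) \<rho> - EE k \<rho>) (length \<rho> - 1)" using M_lead[OF sr] k0 by blast
    moreover have "\<not> length t0 < length \<rho> - 1" using lF[OF that] l0 sig by simp
    ultimately have "(act (M k) \<rho> - EE k \<rho>) t0 = 0" unfolding short_def by blast
    then have a: "act (M k) \<rho> t0 = EE k \<rho> t0" by simp
    have e: "EE k \<rho> t0 = lam i * of_nat (count (mset \<rho>) (L i)) * (if t0 = remove1 (L i) \<rho> then 1 else 0)"
      by (simp add: EE_def k_def sgl_def)
    show ?thesis
    proof (cases "\<rho> = \<sigma>0")
      case True then show ?thesis using a e sig ci by (simp add: X_def)
    next
      case False
      have "count (mset \<rho>) (L i) = 0 \<or> t0 \<noteq> remove1 (L i) \<rho>"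
      proof (rule ccontr)
        assume "\<not> (count (mset \<rho>) (L i) = 0 \<or> t0 \<noteq> remove1 (L i) \<rho>)"
        then have "L i \<in> set \<rho>" "remove1 (L i) \<rho> = remove1 (L i) \<sigma>0"
          using sig ci by (auto simp: count_mset_0_iff)
        then have "\<rho> = \<sigma>0" using uniq_remove[OF sr ss0] sig ci by auto
        then show False using False by simp
      qed
      then show ?thesis using a e False by auto
    qed
  qed
  have "G t0 = (\<Sum>\<rho>\<in>supp F. F \<rho> * act (M k) \<rho> t0)" by (simp add: G_def lext_def)
  also have "\<dots> = (\<Sum>\<rho>\<in>supp F. if \<rho> = \<sigma>0 then F \<sigma>0 * X else 0)"
    by (rule sum.cong) (auto simp: trm)
  also have "\<dots> = F \<sigma>0 * X" using f s0 by (simp add: fin_def sum.delta')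
  finally have "G t0 \<noteq> 0" using s0 Xnz by simp
  then have "G \<noteq> 0" by auto
  then show ?thesis using lenG unfolding G_def by blast
qed

end

lemma pbwM_chi: "pbwM (chi Mv s cL cM) Mv (cM::'a::field_char_0)"
proof unfold_locales
  fix g assume "chi Mv s cL cM g = None" then show "\<exists>i. g = L i" by (cases g) auto
next
  fix x y g and a :: 'a
  assume "chi Mv s cL cM x \<noteq> None" "chi Mv s cL cM y \<noteq> None" "(g, a) \<in> set (brkc x y)" "a \<noteq> 0"
  then show "chi Mv s cL cM g \<noteq> None"
    by (cases x; cases y) (auto split: if_splits)
next
  fix x y
  assume "chi Mv s cL cM x \<noteq> None" "chi Mv s cL cM y \<noteq> None"
  then show "LCs (\<lambda>g. case chi Mv s cL cM g of Some c \<Rightarrow> c | None \<Rightarrow> 0) (brkc x y) = 0"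
    by (cases x; cases y) (auto split: if_splits)
qed auto

lemma pbw_chi': 
  assumes n0: "n0 > 0" and z: "Mv + (of_nat n0 ^ 2 - 1) / 24 * cM = (0::'a::field_char_0)"
  shows "pbw ((chi Mv s cL cM)(L (int n0) := Some 0))"
proof unfold_locales
  fix g assume "((chi Mv s cL cM)(L (int n0) := Some 0)) g = None" then show "\<exists>i. g = L i"
    by (cases g) (auto split: if_splits)
next
  fix x y g and a :: 'a
  assume "((chi Mv s cL cM)(L (int n0) := Some 0)) x \<noteq> None" "((chi Mv s cL cM)(L (int n0) := Some 0)) y \<noteq> None"
    "(g, a) \<in> set (brkc x y)" "a \<noteq> 0"
  then show "((chi Mv s cL cM)(L (int n0) := Some 0)) g \<noteq> None"
    using n0 by (cases x; cases y) (auto split: if_splits)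
next
  fix x y
  assume a: "((chi Mv s cL cM)(L (int n0) := Some 0)) x \<noteq> None" "((chi Mv s cL cM)(L (int n0) := Some 0)) y \<noteq> None"
  have key: "2 * of_nat n0 * Mv + of_int (int n0 ^ 3 - int n0) / 12 * cM = 0"
  proof -
    have "2 * of_nat n0 * Mv + of_int (int n0 ^ 3 - int n0) / 12 * cM
        = 2 * of_nat n0 * (Mv + (of_nat n0 ^ 2 - 1) / 24 * cM)"
      by (simp add: field_simps power3_eq_cube power2_eq_square)
    then show ?thesis using z by simp
  qed
  show "LCs (\<lambda>g. case ((chi Mv s cL cM)(L (int n0) := Some 0)) g of Some c \<Rightarrow> c | None \<Rightarrow> 0) (brkc x y) = 0"
    using a n0 key apply (cases x; cases y) apply (auto split: if_splits simp: algebra_simps)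
    apply (((drule arg_cong[where f="of_int::int\<Rightarrow>'a"])+)?, (simp add: algebra_simps)?,
     (thin_tac "x = _")?, (thin_tac "y = _")?, ((thin_tac "_ < _")+)?, algebra)+
    done
qed


lemma Tens_fin: "f \<in> Tens \<longleftrightarrow> fin f" by (simp add: Tens_def fin_def supp_def)

lemma spanS_mono_aux: "f \<in> spanS A \<Longrightarrow> A \<subseteq> B \<Longrightarrow> f \<in> spanS B"
  by (induction rule: spanS.induct) (auto intro: spanS.intros)

lemma spanS_mono: "A \<subseteq> B \<Longrightarrow> spanS A \<subseteq> spanS B"
  using spanS_mono_aux by blast

lemma (in pbw) srt_Phi: "fin f \<Longrightarrow> Phi ch f \<rho> \<noteq> 0 \<Longrightarrow> srt \<rho>"
proof -
  assume f: "fin f" and r: "Phi ch f \<rho> \<noteq> 0"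
  then have "\<rho> \<in> supp (lext (\<lambda>w. pw w) f)" by (simp add: Phi_def)
  from supp_lext[OF this] obtain w where "pw w \<rho> \<noteq> 0" by auto
  then show ?thesis by (rule srt_pw)
qed

lemma (in pbwM) lam_alt: "lam i = - (2 * of_int i) * (Mv + (of_nat (nat \<bar>i\<bar>) ^ 2 - 1) / 24 * cM)"
proof -
  have "(of_nat (nat \<bar>i\<bar>) :: 'a) = of_int \<bar>i\<bar>" by simp
  moreover have "(of_int \<bar>i\<bar> :: 'a) ^ 2 = of_int i ^ 2"
    by (metis of_int_power power2_abs)
  ultimately have "(of_nat (nat \<bar>i\<bar>) :: 'a) ^ 2 = of_int i ^ 2" by simp
  then show ?thesis unfolding lam_def by (simp add: field_simps power3_eq_cube power2_eq_square)
qed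

lemma Phi_sgl_Nil: "Phi ch (sgl [] (1::'a::field_char_0)) = sgl [] 1"
  by (simp add: Phi_sgl sc_def)

lemma sgl_nonzero: "sgl w (1::'a::field_char_0) \<noteq> (\<lambda>_. 0)" "sgl w (1::'a) \<noteq> 0"
  by (auto simp: sgl_def fun_eq_iff)

theorem theorem3p8:
  fixes Mv s cL cM :: "'a::field_char_0"
  shows "massive_irreducible Mv s cL cM \<longleftrightarrow>
    (\<forall>n::nat. n > 0 \<longrightarrow> Mv + (of_nat n ^ 2 - 1) / 24 * cM \<noteq> 0)"
proof
  assume irr: "massive_irreducible Mv s cL cM"
  show "\<forall>n::nat. n > 0 \<longrightarrow> Mv + (of_nat n ^ 2 - 1) / 24 * cM \<noteq> 0"
  proof (rule ccontr)
    assume "\<not> (\<forall>n::nat. n > 0 \<longrightarrow> Mv + (of_nat n ^ 2 - 1) / 24 * cM \<noteq> 0)"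
    then obtain n0 :: nat where n0: "n0 > 0" and z: "Mv + (of_nat n0 ^ 2 - 1) / 24 * cM = 0" by auto
    define ch' where "ch' = (chi Mv s cL cM)(L (int n0) := Some 0)"
    have pb': "pbw ch'" unfolding ch'_def by (rule pbw_chi'[OF n0 z])
    have pbM: "pbwM (chi Mv s cL cM) Mv cM" by (rule pbwM_chi)
    then have pb: "pbw (chi Mv s cL cM)" by (simp add: pbwM_def)
    define W where "W = NS ch'"
    have chiL: "chi Mv s cL cM (L (int n0)) = None" using n0 by simp
    have sub: "Nsub Mv s cL cM \<subseteq> W"
      unfolding Nsub_NS W_def NS_def
    proof (rule spanS_mono)
      show "NSgen (chi Mv s cL cM) \<subseteq> NSgen ch'"
        unfolding NSgen_def ch'_def using chiL by (auto, metis fun_upd_apply option.distinct(1))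
    qed
    have WT: "W \<subseteq> Tens" using fin_NS by (auto simp: W_def Tens_fin)
    have c1: "\<forall>f\<in>W. \<forall>g\<in>W. (\<lambda>v. f v + g v) \<in> W" by (auto simp: W_def NS_def intro: spanS.add)
    have c2: "\<forall>f\<in>W. \<forall>c. (\<lambda>v. c * f v) \<in> W" by (auto simp: W_def NS_def intro: spanS.smul)
    have c3: "\<forall>f\<in>W. \<forall>x. lmul x f \<in> W" by (auto simp: W_def intro: NS_lmul)
    have "W = Nsub Mv s cL cM \<or> W = Tens"
      using irr sub WT c1 c2 c3 unfolding massive_irreducible_def by blast
    moreover have "W \<noteq> Nsub Mv s cL cM"
    proof
      assume e: "W = Nsub Mv s cL cM"
      have "ch' (L (int n0)) = Some 0" by (simp add: ch'_def)
      then have "(\<lambda>v. sgl ([] @ [L (int n0)]) 1 v - sgl [] 0 v)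
          \<in> {(\<lambda>v. sgl (u @ [h]) 1 v - sgl u c v) | u h c. ch' h = Some (c::'a)}" by blast
      then have "(\<lambda>v. sgl ([] @ [L (int n0)]) 1 v - sgl [] 0 v) \<in> NSgen ch'"
        unfolding NSgen_def by blast
      moreover have "(\<lambda>v. sgl ([] @ [L (int n0)]) 1 v - sgl [] 0 v) = sgl [L (int n0)] (1::'a)"
        by (simp add: sgl_def fun_eq_iff)
      ultimately have "sgl [L (int n0)] (1::'a) \<in> W" unfolding W_def NS_def by (metis spanS.base)
      then have "sgl [L (int n0)] 1 \<in> NS (chi Mv s cL cM)" using e Nsub_NS by metis
      then have "Phi (chi Mv s cL cM) (sgl [L (int n0)] 1) = 0" by (rule pbw.Phi_NS[OF pb])
      moreover have "Phi (chi Mv s cL cM) (sgl [L (int n0)] (1::'a)) = sgl [L (int n0)] 1"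
        using chiL by (simp add: Phi_sgl sc_def)
      ultimately show False using sgl_nonzero by metis
    qed
    moreover have "W \<noteq> Tens"
    proof
      assume "W = Tens"
      then have "sgl [] (1::'a) \<in> NS ch'" by (simp add: W_def Tens_fin)
      then have "Phi ch' (sgl [] (1::'a)) = 0" by (rule pbw.Phi_NS[OF pb'])
      then show False using sgl_nonzero Phi_sgl_Nil by metis
    qed
    ultimately show False by blast
  qed
next
  assume cond: "\<forall>n::nat. n > 0 \<longrightarrow> Mv + (of_nat n ^ 2 - 1) / 24 * cM \<noteq> 0"
  interpret P: pbwM "chi Mv s cL cM" Mv cM by (rule pbwM_chi)
  have lamnz: "P.lam i \<noteq> 0" if "i \<noteq> 0" for i
  proof
    assume "P.lam i = 0"
    moreover have "- (2 * of_int i) \<noteq> (0::'a)" using that by simp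
    ultimately have "Mv + (of_nat (nat \<bar>i\<bar>) ^ 2 - 1) / 24 * cM = 0" using P.lam_alt[of i] by simp
    moreover have "nat \<bar>i\<bar> > 0" using that by simp
    ultimately show False using cond by blast
  qed
  have NT: "Nsub Mv s cL cM \<noteq> Tens"
  proof
    assume "Nsub Mv s cL cM = Tens"
    then have "sgl [] (1::'a) \<in> NS (chi Mv s cL cM)" by (simp add: Nsub_NS[symmetric] Tens_fin)
    then have "Phi (chi Mv s cL cM) (sgl [] (1::'a)) = 0" by (rule P.Phi_NS)
    then show False using sgl_nonzero Phi_sgl_Nil by metis
  qed
  have main: "W = Nsub Mv s cL cM \<or> W = Tens"
    if sub: "Nsub Mv s cL cM \<subseteq> W" and WT: "W \<subseteq> Tens"
      and c1: "\<forall>f\<in>W. \<forall>g\<in>W. (\<lambda>v. f v + g v) \<in> W"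
      and c2: "\<forall>f\<in>W. \<forall>c. (\<lambda>v. c * f v) \<in> W"
      and c3: "\<forall>f\<in>W. \<forall>x. lmul x f \<in> W" for W
  proof (cases "W \<subseteq> Nsub Mv s cL cM")
    case True then show ?thesis using sub by blast
  next
    case False
    then obtain f0 where f0: "f0 \<in> W" "f0 \<notin> Nsub Mv s cL cM" by blast
    let ?ch = "chi Mv s cL cM"
    have NSW: "NS ?ch \<subseteq> W" using sub Nsub_NS by metis
    have finW: "fin f" if "f \<in> W" for f using WT that Tens_fin by blast
    have Wdiff: "f - g \<in> W" if "f \<in> W" "g \<in> W" for f g
    proof -
      have neg: "(\<lambda>v. (-1) * g v) \<in> W" using c2 that by blast
      have h1: "\<forall>g'\<in>W. (\<lambda>v. f v + g' v) \<in> W" using c1 that(1) by blast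
      have "(\<lambda>v. f v + (-1) * g v) \<in> W" using bspec[OF h1 neg] by simp
      then show ?thesis by (simp add: fun_diff_def)
    qed
    have Wzero: "(\<lambda>_. 0) \<in> W" using NSW P.NS_zero' by blast
    have reach: "f \<in> W \<Longrightarrow> Phi ?ch f \<noteq> 0 \<Longrightarrow> (\<forall>\<rho>. Phi ?ch f \<rho> \<noteq> 0 \<longrightarrow> length \<rho> \<le> r) \<Longrightarrow> sgl [] 1 \<in> W" for r f
    proof (induction r arbitrary: f)
      case 0
      have ff: "fin f" using finW 0 by blast
      have PW: "Phi ?ch f \<in> W"
      proof -
        have "f - Phi ?ch f \<in> W" using P.vec_word[OF ff] NSW by blast
        from Wdiff[OF 0(1) this] show ?thesis by simp
      qed
      define a where "a = Phi ?ch f []"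
      have "Phi ?ch f = (\<lambda>v. a * sgl [] 1 v)"
      proof
        fix v show "Phi ?ch f v = a * sgl [] 1 v"
          using 0(3)[rule_format, of v] by (cases v) (auto simp: a_def sgl_def)
      qed
      moreover then have "a \<noteq> 0" using 0(2) by (auto simp: fun_eq_iff)
      ultimately have "(\<lambda>v. (1 / a) * Phi ?ch f v) = sgl [] 1" by (auto simp: fun_eq_iff)
      then show ?case using c2 PW by metis
    next
      case (Suc r)
      show ?case
      proof (cases "\<forall>\<rho>. Phi ?ch f \<rho> \<noteq> 0 \<longrightarrow> length \<rho> \<le> r")
        case True then show ?thesis using Suc by blast
      next
        case False
        then obtain \<sigma>0 where s0: "Phi ?ch f \<sigma>0 \<noteq> 0" "length \<sigma>0 = Suc r" using Suc.prems(3) by force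
        have ff: "fin f" using finW Suc.prems(1) by blast
        obtain k where k: "lext (P.act (M k)) (Phi ?ch f) \<noteq> 0"
          "\<forall>\<rho>. lext (P.act (M k)) (Phi ?ch f) \<rho> \<noteq> 0 \<longrightarrow> length \<rho> \<le> r"
          using P.descent[OF lamnz fin_Phi[OF ff] P.srt_Phi[OF ff] _ s0] Suc.prems(3) by blast
        have "lmul (M k) f \<in> W" using c3 Suc.prems(1) by blast
        moreover have "Phi ?ch (lmul (M k) f) = lext (P.act (M k)) (Phi ?ch f)" by (rule P.Phi_lmul[OF ff])
        ultimately show ?thesis using Suc.IH k by metis
      qed
    qed
    have ff0: "fin f0" using finW f0 by blast
    have "Phi ?ch f0 \<noteq> 0"
    proof
      assume "Phi ?ch f0 = 0"
      then have "f0 \<in> NS ?ch" using P.vec_word[OF ff0] by simp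
      then show False using f0 Nsub_NS by metis
    qed
    moreover obtain r where "\<forall>\<rho>. Phi ?ch f0 \<rho> \<noteq> 0 \<longrightarrow> length \<rho> \<le> r"
    proof -
      have "finite (length ` supp (Phi ?ch f0))" using fin_Phi[OF ff0] by (simp add: fin_def)
      then obtain r where "\<forall>x\<in>length ` supp (Phi ?ch f0). x \<le> r" using finite_nat_set_iff_bounded_le by blast
      then have "\<forall>\<rho>. Phi ?ch f0 \<rho> \<noteq> 0 \<longrightarrow> length \<rho> \<le> r" by auto
      then show ?thesis by (rule that)
    qed
    ultimately have one: "sgl [] 1 \<in> W" using reach f0 by blast
    have words: "sgl w 1 \<in> W" for w
    proof (induction w)
      case Nil then show ?case using one by simp
    next
      case (Cons g w) then show ?case using c3 lmul_sgl by metis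
    qed
    have "Tens \<subseteq> W"
    proof
      fix f :: "gen list \<Rightarrow> 'a" assume "f \<in> Tens"
      then have ff: "fin f" by (simp add: Tens_fin)
      have "(\<lambda>v. \<Sum>w\<in>S. f w * sgl w 1 v) \<in> W" if "finite S" for S
        using that
      proof (induction S rule: finite_induct)
        case empty then show ?case using Wzero by simp
      next
        case (insert w S)
        have a1: "(\<lambda>v. f w * sgl w 1 v) \<in> W" using c2 words by blast
        have h1: "\<forall>g'\<in>W. (\<lambda>v. f w * sgl w 1 v + g' v) \<in> W" using bspec[OF c1 a1] by simp
        have "(\<lambda>v. f w * sgl w 1 v + (\<lambda>v. \<Sum>w\<in>S. f w * sgl w 1 v) v) \<in> W"
          using bspec[OF h1 insert.IH] by simp
        then show ?case using insert by simp
      qed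
      then have "(\<lambda>v. \<Sum>w\<in>supp f. f w * sgl w 1 v) \<in> W" using ff by (simp add: fin_def)
      moreover have "f = (\<lambda>v. \<Sum>w\<in>supp f. f w * sgl w 1 v)"
        using sum_vec_eq[of "supp f" f] ff by (simp add: fin_def)
      ultimately show "f \<in> W" by simp
    qed
    then show ?thesis using WT by blast
  qed
  show "massive_irreducible Mv s cL cM"
    unfolding massive_irreducible_def using NT main by blast
qed


end
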